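(* Let $\tau$ be any permutation of $F^3$ with $\tau(\mathbf 0)=\mathbf 0$. Then the extended perfect code $S_\tau$ of length $16$ is neighbor transitive. Among all such codes $S_\tau$ there are exactly four isomorphism classes, and they are characterized by their ranks, which take the values $11,12,13,14$. The code of rank $14$ has kernel of dimension $8$.
   Context: $F=\mathrm{GF}(2)$, $\mathbf 0$ is the all-zero vector. With $r=3$: index the coordinates of $F^{2^r}$ by $F^r$; $e_a$ is the unit vector at position $a$; $\mathcal H=\{x\in F^{2^r}:\sum_{a:x_a=1}a=\mathbf 0,\ \mathrm{wt}(x)\text{ even}\}$; $x|y$ is concatenation and $C\times D=\{x|y:x\in C,y\in D\}$; $S_\tau=\bigcup_{a\in F^r}(\mathcal H+e_a+e_{\mathbf 0})\times(\mathcal H+e_{\tau(a)}+e_{\tau(\mathbf 0)})$. Codes $C,D\subseteq F^n$ are isomorphic if $x+\pi(C)=D$ for some $x\in F^n$ and coordinate permutation $\pi$ (acting by $\pi(y)_i=y_{\pi^{-1}(i)}$). $\mathrm{Aut}(C)$ is the stabilizer of $C$ in the group of all maps $y\mapsto x+\pi(y)$. A code is neighbor transitive if $\mathrm{Aut}(C)$ acts transitively on $C$ and on the set of words at Hamming distance exactly $1$ from $C$. The rank of $C$ is the dimension of its linear span; the kernel of $C$ is $\{x: x+C=C\}$. *)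

theory Defs
  imports Main "HOL-Combinatorics.Permutations"
begin

text \<open>Binary words: a word of length n over F = GF(2) is a function nat => bool
  (True = 1) that vanishes outside {..<n}. Addition in F is exclusive or.\<close>

type_synonym word = "nat \<Rightarrow> bool"

definition Fn :: "nat \<Rightarrow> word set" where
  "Fn n = {x. \<forall>i\<ge>n. \<not> x i}"

definition zero_word :: word where
  "zero_word = (\<lambda>i. False)"

definition wadd :: "word \<Rightarrow> word \<Rightarrow> word" (infixl "\<oplus>" 65) where
  "x \<oplus> y = (\<lambda>i. x i \<noteq> y i)"

definition unit_vec :: "nat \<Rightarrow> word" where
  "unit_vec a = (\<lambda>i. i = a)"

definition wt :: "nat \<Rightarrow> word \<Rightarrow> nat" where
  "wt n x = card {i. i < n \<and> x i}"

definition hdist :: "nat \<Rightarrow> word \<Rightarrow> word \<Rightarrow> nat" where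
  "hdist n x y = wt n (x \<oplus> y)"

definition code_shift :: "word set \<Rightarrow> word \<Rightarrow> word set" where
  "code_shift C v = (\<lambda>c. c \<oplus> v) ` C"

definition wconcat :: "nat \<Rightarrow> word \<Rightarrow> word \<Rightarrow> word" where
  "wconcat n x y = (\<lambda>i. if i < n then x i else y (i - n))"

definition code_prod :: "nat \<Rightarrow> word set \<Rightarrow> word set \<Rightarrow> word set" where
  "code_prod n C D = {wconcat n x y | x y. x \<in> C \<and> y \<in> D}"

text \<open>Points of F^r are encoded as natural numbers a < 2^r via their binary
  expansion; vector addition in F^r is then bitwise exclusive or.\<close>

definition vsum :: "nat set \<Rightarrow> nat" where
  "vsum A = Finite_Set.fold (\<lambda>a s. Bit_Operations.xor a s) 0 A"

text \<open>The extended Hamming code H of length 2^r with r = 3 (coordinates indexed by F^3).\<close>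
definition Ham :: "word set" where
  "Ham = {x \<in> Fn 8. vsum {a. a < 8 \<and> x a} = 0 \<and> even (wt 8 x)}"

definition S_tau :: "(nat \<Rightarrow> nat) \<Rightarrow> word set" where
  "S_tau \<tau> = (\<Union>a\<in>{..<8}.
      code_prod 8 (code_shift (code_shift Ham (unit_vec a)) (unit_vec 0))
                  (code_shift (code_shift Ham (unit_vec (\<tau> a))) (unit_vec (\<tau> 0))))"

definition perm_word :: "(nat \<Rightarrow> nat) \<Rightarrow> word \<Rightarrow> word" where
  "perm_word \<pi> y = (\<lambda>i. y (inv \<pi> i))"

definition isometry_map :: "word \<Rightarrow> (nat \<Rightarrow> nat) \<Rightarrow> word \<Rightarrow> word" where
  "isometry_map x \<pi> y = x \<oplus> perm_word \<pi> y"

definition codes_isomorphic :: "nat \<Rightarrow> word set \<Rightarrow> word set \<Rightarrow> bool" where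
  "codes_isomorphic n C D \<longleftrightarrow>
     (\<exists>x \<pi>. x \<in> Fn n \<and> \<pi> permutes {..<n} \<and> isometry_map x \<pi> ` C = D)"

definition Aut :: "nat \<Rightarrow> word set \<Rightarrow> (word \<times> (nat \<Rightarrow> nat)) set" where
  "Aut n C = {(x, \<pi>). x \<in> Fn n \<and> \<pi> permutes {..<n} \<and> isometry_map x \<pi> ` C = C}"

definition transitive_on :: "nat \<Rightarrow> word set \<Rightarrow> word set \<Rightarrow> bool" where
  "transitive_on n C X \<longleftrightarrow>
     (\<forall>u\<in>X. \<forall>v\<in>X. \<exists>(x, \<pi>)\<in>Aut n C. isometry_map x \<pi> u = v)"

definition neighbors :: "nat \<Rightarrow> word set \<Rightarrow> word set" where
  "neighbors n C = {y \<in> Fn n. y \<notin> C \<and> (\<exists>c\<in>C. hdist n y c = 1)}"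

definition neighbor_transitive :: "nat \<Rightarrow> word set \<Rightarrow> bool" where
  "neighbor_transitive n C \<longleftrightarrow> transitive_on n C C \<and> transitive_on n C (neighbors n C)"

definition gf2_span :: "word set \<Rightarrow> word set" where
  "gf2_span S = {Finite_Set.fold (\<oplus>) zero_word B | B. finite B \<and> B \<subseteq> S}"

definition gf2_dim :: "word set \<Rightarrow> nat" where
  "gf2_dim V = (LEAST k. \<exists>B. B \<subseteq> V \<and> finite B \<and> card B = k \<and> gf2_span B = V)"

definition code_rank :: "word set \<Rightarrow> nat" where
  "code_rank C = gf2_dim (gf2_span C)"

definition code_kernel :: "nat \<Rightarrow> word set \<Rightarrow> word set" where
  "code_kernel n C = {x \<in> Fn n. code_shift C x = C}"

end

theory Submission
  imports Defs
begin

definition lin :: "nat \<Rightarrow> nat \<Rightarrow> nat \<Rightarrow> nat \<Rightarrow> nat" where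
  "lin c1 c2 c4 x = (if x = 0 then 0 else if x = 1 then c1 else if x = 2 then c2
     else if x = 3 then xor c1 c2 else if x = 4 then c4 else if x = 5 then xor c1 c4
     else if x = 6 then xor c2 c4 else if x = 7 then xor (xor c1 c2) c4 else x)"

lemma lt8_cases: "(x::nat) < 8 \<longleftrightarrow> x = 0 \<or> x = 1 \<or> x = 2 \<or> x = 3 \<or> x = 4 \<or> x = 5 \<or> x = 6 \<or> x = 7"
  by auto

lemma xor_lt8: "(x::nat) < 8 \<Longrightarrow> y < 8 \<Longrightarrow> xor x y < 8"
  unfolding lt8_cases by auto

lemma xor_left_self_nat: "xor (a::nat) (xor a b) = b"
  by (simp add: xor.assoc[symmetric])

lemmas xor_ac = xor.assoc xor.commute xor.left_commute xor_left_self_nat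

lemma lin_linear: "(x::nat) < 8 \<Longrightarrow> y < 8 \<Longrightarrow> lin c1 c2 c4 (xor x y) = xor (lin c1 c2 c4 x) (lin c1 c2 c4 y)"
  unfolding lt8_cases by (elim disjE; simp add: lin_def xor_ac)

lemma wadd_comm: "x \<oplus> y = y \<oplus> x" by (auto simp: wadd_def)
lemma wadd_assoc: "(x \<oplus> y) \<oplus> z = x \<oplus> (y \<oplus> z)" by (auto simp: wadd_def)
lemma wadd_lcomm: "x \<oplus> (y \<oplus> z) = y \<oplus> (x \<oplus> z)" by (auto simp: wadd_def)
lemma wadd_self[simp]: "x \<oplus> x = zero_word" by (auto simp: wadd_def zero_word_def)
lemma wadd_zero[simp]: "x \<oplus> zero_word = x" "zero_word \<oplus> x = x" by (auto simp: wadd_def zero_word_def)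
lemma wadd_lself[simp]: "x \<oplus> (x \<oplus> y) = y" by (auto simp: wadd_def)
lemma wadd_rself[simp]: "(y \<oplus> x) \<oplus> x = y" by (auto simp: wadd_def)
lemma wadd_cancel: "x \<oplus> y = x \<oplus> z \<longleftrightarrow> y = z" by (metis wadd_lself)
lemma wadd_cancel_r[simp]: "x \<oplus> z = y \<oplus> z \<longleftrightarrow> x = y" by (metis wadd_rself)
lemma wadd_app: "(x \<oplus> y) i = (x i \<noteq> y i)" by (simp add: wadd_def)

lemma Fn_wadd: "x \<in> Fn n \<Longrightarrow> y \<in> Fn n \<Longrightarrow> x \<oplus> y \<in> Fn n" by (auto simp: Fn_def wadd_def)
lemma Fn_zero[simp]: "zero_word \<in> Fn n" by (auto simp: Fn_def zero_word_def)
lemma Fn_unit: "i < n \<Longrightarrow> unit_vec i \<in> Fn n" by (auto simp: Fn_def unit_vec_def)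

definition supp :: "nat \<Rightarrow> word \<Rightarrow> nat set" where
  "supp n x = {i. i < n \<and> x i}"

lemma supp_sub: "supp n x \<subseteq> {..<n}" by (auto simp: supp_def)
lemma finite_supp[simp]: "finite (supp n x)" by (rule finite_subset[OF supp_sub]) simp
lemma supp_wadd: "supp n (x \<oplus> y) = (supp n x - supp n y) \<union> (supp n y - supp n x)"
  by (auto simp: supp_def wadd_def)
lemma wt_supp: "wt n x = card (supp n x)" by (simp add: wt_def supp_def)

lemma Fn_eq_supp: "x \<in> Fn n \<Longrightarrow> x = (\<lambda>i. i \<in> supp n x)"
  by (auto simp: Fn_def supp_def fun_eq_iff) (meson not_le)

lemma Fn_image_Pow: "Fn n = (\<lambda>S i. i \<in> S) ` Pow {..<n}"
proof
  show "Fn n \<subseteq> (\<lambda>S i. i \<in> S) ` Pow {..<n}"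
    using Fn_eq_supp supp_sub by blast
  show "(\<lambda>S i. i \<in> S) ` Pow {..<n} \<subseteq> Fn n" by (auto simp: Fn_def)
qed

lemma finite_Fn[simp]: "finite (Fn n)" by (simp add: Fn_image_Pow)

lemma card_Fn: "card (Fn n) = 2 ^ n"
proof -
  have "inj_on (\<lambda>S i. i \<in> S) (Pow {..<n})" by (auto simp: inj_on_def fun_eq_iff)
  then show ?thesis by (simp add: Fn_image_Pow card_image card_Pow)
qed

lemma cfc_xor: "comp_fun_commute_on UNIV (\<lambda>a (s::nat). xor a s)"
  by (auto simp: comp_fun_commute_on_def fun_eq_iff xor.left_commute)

lemma vsum_empty[simp]: "vsum {} = 0" by (simp add: vsum_def)

lemma vsum_insert: "finite A \<Longrightarrow> x \<notin> A \<Longrightarrow> vsum (insert x A) = xor x (vsum A)"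
  unfolding vsum_def by (rule comp_fun_commute_on.fold_insert[OF cfc_xor]) auto

lemma vsum_sd1: "finite A \<Longrightarrow> vsum ((A - {x}) \<union> ({x} - A)) = xor x (vsum A)"
proof (cases "x \<in> A")
  case True
  assume f: "finite A"
  have "A = insert x (A - {x})" using True by auto
  then have "vsum A = xor x (vsum (A - {x}))" using f vsum_insert[of "A - {x}" x] by simp
  moreover have "(A - {x}) \<union> ({x} - A) = A - {x}" using True by auto
  ultimately show ?thesis by (simp add: xor_left_self_nat)
next
  case False
  assume f: "finite A"
  have "(A - {x}) \<union> ({x} - A) = insert x A" using False by auto
  then show ?thesis using vsum_insert[OF f False] by simp
qed

lemma vsum_symdiff: assumes fA: "finite A" and fB: "finite B" shows " vsum ((A - B) \<union> (B - A)) = xor (vsum A) (vsum B)"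
using fB proof (induction B rule: finite_induct)
  case empty then show ?case by simp
next
  case (insert x F)
  have e: "(A - insert x F) \<union> (insert x F - A) = (((A - F) \<union> (F - A)) - {x}) \<union> ({x} - ((A - F) \<union> (F - A)))"
    using insert.hyps by auto
  have "vsum ((A - insert x F) \<union> (insert x F - A)) = xor x (vsum ((A - F) \<union> (F - A)))"
    unfolding e by (rule vsum_sd1) (use insert fA in auto)
  also have "\<dots> = xor (vsum A) (vsum (insert x F))"
    using insert fA by (simp add: vsum_insert xor_ac)
  finally show ?case .
qed

lemma card_sd1_parity: "finite A \<Longrightarrow> even (card ((A - {x}) \<union> ({x} - A))) \<longleftrightarrow> \<not> even (card A)"
proof (cases "x \<in> A")
  case True
  assume f: "finite A"
  have "(A - {x}) \<union> ({x} - A) = A - {x}" using True by auto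
  moreover have "card A = Suc (card (A - {x}))" using True f
    by (metis card_Suc_Diff1)
  ultimately show ?thesis by simp
next
  case False
  assume f: "finite A"
  have "(A - {x}) \<union> ({x} - A) = insert x A" using False by auto
  then show ?thesis using f False by simp
qed

lemma card_symdiff_parity: assumes fA: "finite A" and fB: "finite B" shows "
   even (card ((A - B) \<union> (B - A))) \<longleftrightarrow> (even (card A) \<longleftrightarrow> even (card B))"
using fB proof (induction B rule: finite_induct)
  case empty then show ?case by simp
next
  case (insert x F)
  have e: "(A - insert x F) \<union> (insert x F - A) = (((A - F) \<union> (F - A)) - {x}) \<union> ({x} - ((A - F) \<union> (F - A)))"
    using insert.hyps by auto
  show ?case unfolding e
    by (subst card_sd1_parity) (use insert fA in auto)
qed

definition sm :: "word set \<Rightarrow> word" where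
  "sm B = Finite_Set.fold (\<oplus>) zero_word B"

lemma cfc_wadd: "comp_fun_commute_on UNIV (\<oplus>)"
  by (auto simp: comp_fun_commute_on_def fun_eq_iff wadd_def)

lemma sm_empty[simp]: "sm {} = zero_word" by (simp add: sm_def)

lemma sm_insert: "finite A \<Longrightarrow> x \<notin> A \<Longrightarrow> sm (insert x A) = x \<oplus> sm A"
  unfolding sm_def by (rule comp_fun_commute_on.fold_insert[OF cfc_wadd]) auto

lemma sm_sd1: "finite A \<Longrightarrow> sm ((A - {x}) \<union> ({x} - A)) = x \<oplus> sm A"
proof (cases "x \<in> A")
  case True
  assume f: "finite A"
  have "A = insert x (A - {x})" using True by auto
  then have "sm A = x \<oplus> sm (A - {x})" using f sm_insert[of "A - {x}" x] by simp
  moreover have "(A - {x}) \<union> ({x} - A) = A - {x}" using True by auto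
  ultimately show ?thesis by simp
next
  case False
  assume f: "finite A"
  have "(A - {x}) \<union> ({x} - A) = insert x A" using False by auto
  then show ?thesis using sm_insert[OF f False] by simp
qed

lemma sm_symdiff: assumes fA: "finite A" and fB: "finite B" shows " sm ((A - B) \<union> (B - A)) = sm A \<oplus> sm B"
using fB proof (induction B rule: finite_induct)
  case empty then show ?case by simp
next
  case (insert x F)
  have e: "(A - insert x F) \<union> (insert x F - A) = (((A - F) \<union> (F - A)) - {x}) \<union> ({x} - ((A - F) \<union> (F - A)))"
    using insert.hyps by auto
  have "sm ((A - insert x F) \<union> (insert x F - A)) = x \<oplus> sm ((A - F) \<union> (F - A))"
    unfolding e by (rule sm_sd1) (use insert fA in auto)
  also have "\<dots> = sm A \<oplus> sm (insert x F)"
    using insert fA by (simp add: sm_insert wadd_lcomm)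
  finally show ?case .
qed

section \<open>Syndromes on words of length 8\<close>

definition syn :: "word \<Rightarrow> nat" where "syn u = vsum (supp 8 u)"
definition fib8 :: "nat \<Rightarrow> word set" where
  "fib8 a = {u \<in> Fn 8. even (wt 8 u) \<and> syn u = a}"
definition E8 :: "word set" where "E8 = {u \<in> Fn 8. even (wt 8 u)}"
definition cw :: "nat \<Rightarrow> word" where "cw a = unit_vec a \<oplus> unit_vec 0"

lemma Ham_fib8: "Ham = fib8 0"
  by (auto simp: Ham_def fib8_def syn_def supp_def)

lemma vsum_lt8: assumes "S \<subseteq> {..<8}" shows "vsum S < 8"
proof -
  have "finite S" using assms finite_subset by blast
  then show ?thesis using assms
  proof (induction S rule: finite_induct)
    case empty then show ?case by simp
  next
    case (insert x F) then show ?case by (simp add: vsum_insert xor_lt8)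
  qed
qed

lemma syn_lt8: "syn u < 8" unfolding syn_def by (rule vsum_lt8[OF supp_sub])

lemma syn_wadd: "syn (u \<oplus> v) = xor (syn u) (syn v)"
  unfolding syn_def supp_wadd by (rule vsum_symdiff) auto

lemma even_wadd: "even (wt 8 (u \<oplus> v)) \<longleftrightarrow> (even (wt 8 u) \<longleftrightarrow> even (wt 8 v))"
  unfolding wt_supp supp_wadd by (rule card_symdiff_parity) auto

lemma fib8_wadd: "u \<in> fib8 p \<Longrightarrow> v \<in> fib8 q \<Longrightarrow> u \<oplus> v \<in> fib8 (xor p q)"
  by (auto simp: fib8_def Fn_wadd syn_wadd even_wadd)

lemma fib8_Fn: "u \<in> fib8 p \<Longrightarrow> u \<in> Fn 8" by (simp add: fib8_def)
lemma fib8_syn: "u \<in> fib8 p \<Longrightarrow> syn u = p" by (simp add: fib8_def)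

lemma supp_unit: "i < n \<Longrightarrow> supp n (unit_vec i) = {i}"
  by (auto simp: supp_def unit_vec_def)

lemma syn_unit: "i < 8 \<Longrightarrow> syn (unit_vec i) = i"
  by (simp add: syn_def supp_unit vsum_insert)

lemma wt_unit: "i < n \<Longrightarrow> wt n (unit_vec i) = 1"
  by (simp add: wt_supp supp_unit)

lemma cw_fib8: "a < 8 \<Longrightarrow> cw a \<in> fib8 a"
  by (simp add: cw_def fib8_def Fn_wadd Fn_unit syn_wadd syn_unit even_wadd wt_unit)

lemma fib8_zero: "zero_word \<in> fib8 0"
proof -
  have "supp 8 zero_word = {}" by (simp add: supp_def zero_word_def)
  then show ?thesis by (simp add: fib8_def syn_def wt_supp)
qed

lemma fib8_empty: "a \<ge> 8 \<Longrightarrow> fib8 a = {}"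
  using syn_lt8 by (auto simp: fib8_def) (metis leD syn_lt8)

lemma fib8_transl: "a < 8 \<Longrightarrow> fib8 a = (\<lambda>u. u \<oplus> cw a) ` fib8 0"
proof
  assume a: "a < 8"
  show "fib8 a \<subseteq> (\<lambda>u. u \<oplus> cw a) ` fib8 0"
  proof
    fix u assume u: "u \<in> fib8 a"
    have "u \<oplus> cw a \<in> fib8 (xor a a)" by (rule fib8_wadd[OF u cw_fib8[OF a]])
    then have "u \<oplus> cw a \<in> fib8 0" by simp
    moreover have "u = (u \<oplus> cw a) \<oplus> cw a" by simp
    ultimately show "u \<in> (\<lambda>u. u \<oplus> cw a) ` fib8 0" by blast
  qed
  show "(\<lambda>u. u \<oplus> cw a) ` fib8 0 \<subseteq> fib8 a"
    using fib8_wadd[OF _ cw_fib8[OF a], of _ 0] by auto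
qed

lemma finite_fib8[simp]: "finite (fib8 a)"
  by (rule finite_subset[of _ "Fn 8"]) (auto simp: fib8_def)

lemma card_fib8_eq: "a < 8 \<Longrightarrow> card (fib8 a) = card (fib8 0)"
proof -
  assume a: "a < 8"
  have "inj_on (\<lambda>u. u \<oplus> cw a) (fib8 0)" by (auto simp: inj_on_def wadd_comm wadd_cancel)
  then show ?thesis by (simp add: fib8_transl[OF a] card_image)
qed

lemma E8_Union: "E8 = (\<Union>a\<in>{..<8}. fib8 a)"
  using syn_lt8 by (auto simp: E8_def fib8_def)

lemma card_E8_fib: "card E8 = 8 * card (fib8 0)"
proof -
  have "card E8 = (\<Sum>a\<in>{..<8}. card (fib8 a))"
    unfolding E8_Union by (rule card_UN_disjoint) (auto simp: fib8_def)
  also have "\<dots> = (\<Sum>a\<in>{..<8::nat}. card (fib8 0))" by (intro sum.cong refl card_fib8_eq) simp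
  finally show ?thesis by simp
qed

lemma card_E8: "card E8 = 128"
proof -
  let ?O = "{u \<in> Fn 8. odd (wt 8 u)}"
  have fO: "?O = (\<lambda>u. u \<oplus> unit_vec 0) ` E8"
  proof
    show "?O \<subseteq> (\<lambda>u. u \<oplus> unit_vec 0) ` E8"
    proof
      fix u assume u: "u \<in> ?O"
      have "u \<oplus> unit_vec 0 \<in> E8" using u by (simp add: E8_def Fn_wadd Fn_unit even_wadd wt_unit)
      moreover have "u = (u \<oplus> unit_vec 0) \<oplus> unit_vec 0" by simp
      ultimately show "u \<in> (\<lambda>u. u \<oplus> unit_vec 0) ` E8" by blast
    qed
    show "(\<lambda>u. u \<oplus> unit_vec 0) ` E8 \<subseteq> ?O"
      by (auto simp: E8_def Fn_wadd Fn_unit even_wadd wt_unit)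
  qed
  have "inj_on (\<lambda>u. u \<oplus> unit_vec 0) E8" by (auto simp: inj_on_def wadd_comm wadd_cancel)
  then have cO: "card ?O = card E8" by (simp add: fO card_image)
  have "Fn 8 = E8 \<union> ?O" by (auto simp: E8_def)
  moreover have "E8 \<inter> ?O = {}" by (auto simp: E8_def)
  moreover have "finite E8" "finite ?O" by (auto simp: E8_def)
  ultimately have "card (Fn 8) = card E8 + card ?O" by (metis card_Un_disjoint)
  then show ?thesis using cO card_Fn[of 8] by simp
qed

lemma card_fib8: "a < 8 \<Longrightarrow> card (fib8 a) = 16"
proof -
  assume a: "a < 8"
  have "card (fib8 a) = card (fib8 0)" by (rule card_fib8_eq[OF a])
  then show ?thesis using card_E8 card_E8_fib by simp
qed

lemma wconcat_Fn: "u \<in> Fn 8 \<Longrightarrow> v \<in> Fn 8 \<Longrightarrow> wconcat 8 u v \<in> Fn 16"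
  by (auto simp: Fn_def wconcat_def)

lemma wconcat_wadd: "wconcat 8 u v \<oplus> wconcat 8 u' v' = wconcat 8 (u \<oplus> u') (v \<oplus> v')"
  by (auto simp: wconcat_def wadd_def fun_eq_iff)

lemma wconcat_zero: "wconcat 8 zero_word zero_word = zero_word"
  by (auto simp: wconcat_def zero_word_def fun_eq_iff)

lemma wconcat_inj: assumes "u \<in> Fn 8" "v \<in> Fn 8" "u' \<in> Fn 8" "v' \<in> Fn 8"
  and "wconcat 8 u v = wconcat 8 u' v'" shows "u = u' \<and> v = v'"
proof
  show "u = u'"
  proof
    fix i show "u i = u' i"
      using assms(1,3) fun_cong[OF assms(5), of i] by (cases "i < 8") (auto simp: wconcat_def Fn_def)
  qed
  show "v = v'"
  proof
    fix i show "v i = v' i"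
      using fun_cong[OF assms(5), of "i + 8"] by (simp add: wconcat_def)
  qed
qed

lemma Fn16_split: assumes "w \<in> Fn 16"
  shows "w = wconcat 8 (\<lambda>i. i < 8 \<and> w i) (\<lambda>i. i < 8 \<and> w (i + 8))"
    "(\<lambda>i. i < 8 \<and> w i) \<in> Fn 8" "(\<lambda>i. i < 8 \<and> w (i + 8)) \<in> Fn 8"
  using assms apply (auto simp: wconcat_def Fn_def fun_eq_iff)
  subgoal for x by (cases "x < 16") auto
  done

definition fib :: "nat \<times> nat \<Rightarrow> word set" where
  "fib v = (\<lambda>(u, w). wconcat 8 u w) ` (fib8 (fst v) \<times> fib8 (snd v))"

definition PW :: "(nat \<times> nat) set \<Rightarrow> word set" where
  "PW W = (\<Union>v\<in>W. fib v)"

lemma fib_mem: "w \<in> fib (p, q) \<longleftrightarrow> (\<exists>u v. w = wconcat 8 u v \<and> u \<in> fib8 p \<and> v \<in> fib8 q)"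
  by (auto simp: fib_def)

lemma fib_Fn: "w \<in> fib v \<Longrightarrow> w \<in> Fn 16"
  by (auto simp: fib_def fib8_def wconcat_Fn)

lemma finite_fib[simp]: "finite (fib v)" by (simp add: fib_def)

lemma card_fib: assumes "p < 8" "q < 8" shows "card (fib (p, q)) = 256"
proof -
  have "inj_on (\<lambda>(u, w). wconcat 8 u w) (fib8 p \<times> fib8 q)"
    by (auto simp: inj_on_def fib8_def dest: wconcat_inj)
  then have "card (fib (p, q)) = card (fib8 p \<times> fib8 q)" by (simp add: fib_def card_image)
  also have "\<dots> = 256" using assms by (simp add: card_cartesian_product card_fib8)
  finally show ?thesis .
qed

lemma fib_disj: assumes "w \<in> fib v" "w \<in> fib v'" shows "v = v'"
proof -
  obtain u1 w1 where "w = wconcat 8 u1 w1" "u1 \<in> fib8 (fst v)" "w1 \<in> fib8 (snd v)"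
    using assms(1) by (auto simp: fib_def)
  moreover obtain u2 w2 where "w = wconcat 8 u2 w2" "u2 \<in> fib8 (fst v')" "w2 \<in> fib8 (snd v')"
    using assms(2) by (auto simp: fib_def)
  ultimately have "u1 = u2 \<and> w1 = w2" using wconcat_inj[of u1 w1 u2 w2] by (auto simp: fib8_def)
  then show ?thesis using \<open>u1 \<in> _\<close> \<open>u2 \<in> _\<close> \<open>w1 \<in> _\<close> \<open>w2 \<in> _\<close>
    by (metis fib8_syn prod.collapse)
qed

lemma fib_wadd: "w \<in> fib (p, q) \<Longrightarrow> w' \<in> fib (p', q') \<Longrightarrow> w \<oplus> w' \<in> fib (xor p p', xor q q')"
  unfolding fib_mem using fib8_wadd wconcat_wadd by metis

definition cw2 :: "nat \<times> nat \<Rightarrow> word" where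
  "cw2 v = wconcat 8 (cw (fst v)) (cw (snd v))"

lemma cw2_fib: "p < 8 \<Longrightarrow> q < 8 \<Longrightarrow> cw2 (p, q) \<in> fib (p, q)"
  unfolding cw2_def fib_mem using cw_fib8 by auto

lemma zero_fib: "zero_word \<in> fib (0, 0)"
  unfolding fib_mem using fib8_zero wconcat_zero by metis

lemma fib_empty: "\<not> (fst v < 8 \<and> snd v < 8) \<Longrightarrow> fib v = {}"
  by (auto simp: fib_def fib8_empty)

lemma PW_Fn: "PW W \<subseteq> Fn 16" by (auto simp: PW_def dest: fib_Fn)
lemma finite_PW[simp]: "finite (PW W)" by (rule finite_subset[OF PW_Fn]) simp

lemma card_PW: assumes "finite W" "W \<subseteq> {..<8} \<times> {..<8}" shows "card (PW W) = 256 * card W"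
proof -
  have "card (PW W) = (\<Sum>v\<in>W. card (fib v))"
    unfolding PW_def by (rule card_UN_disjoint) (use assms fib_disj in auto)
  also have "\<dots> = (\<Sum>v\<in>W. 256)"
  proof (rule sum.cong[OF refl])
    fix v assume "v \<in> W"
    then obtain p q where "v = (p, q)" "p < 8" "q < 8" using assms(2) by auto
    then show "card (fib v) = 256" by (simp add: card_fib)
  qed
  finally show ?thesis by simp
qed

lemma PW_mem: "w \<in> PW W \<longleftrightarrow> (\<exists>v\<in>W. w \<in> fib v)" by (simp add: PW_def)

definition graph :: "(nat \<Rightarrow> nat) \<Rightarrow> (nat \<times> nat) set" where
  "graph f = (\<lambda>y. (y, f y)) ` {..<8}"

lemma graph_sub: "(\<And>y. y < 8 \<Longrightarrow> f y < 8) \<Longrightarrow> graph f \<subseteq> {..<8} \<times> {..<8}"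
  by (auto simp: graph_def)

lemma card_graph: "card (graph f) = 8"
proof -
  have "inj_on (\<lambda>y. (y, f y)) {..<8}" by (auto simp: inj_on_def)
  then show ?thesis by (simp add: graph_def card_image)
qed

lemma finite_graph[simp]: "finite (graph f)" by (simp add: graph_def)

lemma graph_cong: "(\<And>y. y < 8 \<Longrightarrow> f y = g y) \<Longrightarrow> graph f = graph g"
  by (auto simp: graph_def)

lemma code_shift2: "code_shift (code_shift Ham (unit_vec a)) (unit_vec 0) = (\<lambda>u. u \<oplus> cw a) ` fib8 0"
  by (simp add: code_shift_def image_image Ham_fib8 cw_def wadd_assoc)

lemma code_shift2': "a < 8 \<Longrightarrow> code_shift (code_shift Ham (unit_vec a)) (unit_vec 0) = fib8 a"
  unfolding code_shift2 by (rule fib8_transl[symmetric])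

lemma code_prod_fib: "code_prod 8 (fib8 p) (fib8 q) = fib (p, q)"
  by (auto simp: code_prod_def fib_def)

lemma S_tau_PW: assumes "\<tau> permutes {..<8}" "\<tau> 0 = 0" shows "S_tau \<tau> = PW (graph \<tau>)"
proof -
  have t8: "a < 8 \<Longrightarrow> \<tau> a < 8" for a using permutes_in_image[OF assms(1)] by simp
  have "S_tau \<tau> = (\<Union>a\<in>{..<8}. code_prod 8 (fib8 a) (fib8 (\<tau> a)))"
    unfolding S_tau_def assms(2) by (rule SUP_cong) (auto simp: code_shift2' t8)
  also have "\<dots> = (\<Union>a\<in>{..<8}. fib (a, \<tau> a))"
    by (simp add: code_prod_fib)
  also have "\<dots> = PW (graph \<tau>)" by (simp add: PW_def graph_def)
  finally show ?thesis .
qed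

section \<open>Isometries\<close>

lemma perm_word_wadd: "perm_word \<pi> (x \<oplus> y) = perm_word \<pi> x \<oplus> perm_word \<pi> y"
  by (simp add: perm_word_def wadd_def)

lemma perm_word_zero[simp]: "perm_word \<pi> zero_word = zero_word"
  by (simp add: perm_word_def zero_word_def)

lemma perm_word_Fn: assumes "\<pi> permutes {..<n}" "x \<in> Fn n" shows "perm_word \<pi> x \<in> Fn n"
proof -
  have ip: "inv \<pi> permutes {..<n}" by (rule permutes_inv[OF assms(1)])
  show ?thesis using assms(2) permutes_not_in[OF ip] by (auto simp: Fn_def perm_word_def)
qed

lemma perm_word_comp: assumes "bij \<pi>" "bij \<rho>"
  shows "perm_word \<pi> (perm_word \<rho> y) = perm_word (\<pi> \<circ> \<rho>) y"
  using assms by (simp add: perm_word_def o_inv_distrib)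

lemma perm_word_inv: assumes "bij \<pi>" shows "perm_word (inv \<pi>) (perm_word \<pi> y) = y"
  using assms by (simp add: perm_word_def inv_inv_eq bij_is_inj)

lemma perm_word_unit: assumes "bij \<pi>" shows "perm_word \<pi> (unit_vec i) = unit_vec (\<pi> i)"
  using assms by (auto simp: perm_word_def unit_vec_def fun_eq_iff bij_inv_eq_iff inv_f_f bij_is_inj)

lemma perm_word_app: assumes "bij \<pi>" shows "perm_word \<pi> y (\<pi> i) = y i"
  using assms by (simp add: perm_word_def inv_f_f bij_is_inj)

lemma supp_perm: assumes "\<pi> permutes {..<n}" shows "supp n (perm_word \<pi> y) = \<pi> ` supp n y"
proof -
  have b: "bij \<pi>" using assms permutes_bij by blast
  show ?thesis
  proof
    show "supp n (perm_word \<pi> y) \<subseteq> \<pi> ` supp n y"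
    proof
      fix j assume j: "j \<in> supp n (perm_word \<pi> y)"
      have "j = \<pi> (inv \<pi> j)" using b by (simp add: surj_f_inv_f bij_is_surj)
      moreover have "inv \<pi> j < n" using j permutes_in_image[OF permutes_inv[OF assms]] by (auto simp: supp_def)
      ultimately show "j \<in> \<pi> ` supp n y" using j by (auto simp: supp_def perm_word_def)
    qed
    show "\<pi> ` supp n y \<subseteq> supp n (perm_word \<pi> y)"
      using permutes_in_image[OF assms] perm_word_app[OF b] by (auto simp: supp_def)
  qed
qed

lemma wt_perm: assumes "\<pi> permutes {..<n}" shows "wt n (perm_word \<pi> y) = wt n y"
proof -
  have "inj \<pi>" using assms permutes_inj by blast
  then show ?thesis by (simp add: wt_supp supp_perm[OF assms] card_image inj_on_subset)
qed

lemma iso_map_wadd: "isometry_map x \<pi> y \<oplus> isometry_map x \<pi> z = perm_word \<pi> (y \<oplus> z)"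
  unfolding isometry_map_def perm_word_wadd by (auto simp: wadd_def fun_eq_iff)

lemma hdist_iso: assumes "\<pi> permutes {..<n}"
  shows "hdist n (isometry_map x \<pi> y) (isometry_map x \<pi> z) = hdist n y z"
  by (simp add: hdist_def iso_map_wadd wt_perm[OF assms])

lemma iso_map_comp: assumes "bij \<pi>" "bij \<rho>"
  shows "isometry_map x \<pi> (isometry_map y \<rho> z) = isometry_map (x \<oplus> perm_word \<pi> y) (\<pi> \<circ> \<rho>) z"
  by (simp add: isometry_map_def perm_word_wadd perm_word_comp[OF assms] wadd_assoc)

lemma iso_map_inv: assumes "bij \<pi>"
  shows "isometry_map (perm_word (inv \<pi>) x) (inv \<pi>) (isometry_map x \<pi> z) = z"
  by (simp add: isometry_map_def perm_word_wadd perm_word_inv[OF assms] wadd_assoc[symmetric])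

lemma iso_map_Fn: "x \<in> Fn n \<Longrightarrow> \<pi> permutes {..<n} \<Longrightarrow> y \<in> Fn n \<Longrightarrow> isometry_map x \<pi> y \<in> Fn n"
  by (simp add: isometry_map_def Fn_wadd perm_word_Fn)

lemma iso_map_inj: "inj (isometry_map x \<pi>)" if "bij \<pi>"
proof (rule injI)
  fix y z assume "isometry_map x \<pi> y = isometry_map x \<pi> z"
  then have "isometry_map (perm_word (inv \<pi>) x) (inv \<pi>) (isometry_map x \<pi> y) =
     isometry_map (perm_word (inv \<pi>) x) (inv \<pi>) (isometry_map x \<pi> z)" by simp
  then show "y = z" using iso_map_inv[OF that] by simp
qed

lemma Aut_mem: "(x, \<pi>) \<in> Aut n C \<longleftrightarrow> x \<in> Fn n \<and> \<pi> permutes {..<n} \<and> isometry_map x \<pi> ` C = C"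
  by (simp add: Aut_def)

lemma Aut_comp: assumes "(x, \<pi>) \<in> Aut n C" "(y, \<rho>) \<in> Aut n C"
  shows "(x \<oplus> perm_word \<pi> y, \<pi> \<circ> \<rho>) \<in> Aut n C"
proof -
  have p: "\<pi> permutes {..<n}" "\<rho> permutes {..<n}" using assms by (auto simp: Aut_mem)
  then have b: "bij \<pi>" "bij \<rho>" using permutes_bij by auto
  have "isometry_map (x \<oplus> perm_word \<pi> y) (\<pi> \<circ> \<rho>) ` C = isometry_map x \<pi> ` (isometry_map y \<rho> ` C)"
    by (simp add: image_image iso_map_comp[OF b])
  also have "\<dots> = C" using assms by (simp add: Aut_mem)
  finally show ?thesis using assms p by (auto simp: Aut_mem Fn_wadd perm_word_Fn permutes_compose)
qed

lemma Aut_inv: assumes "(x, \<pi>) \<in> Aut n C" shows "(perm_word (inv \<pi>) x, inv \<pi>) \<in> Aut n C"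
proof -
  have p: "\<pi> permutes {..<n}" using assms by (auto simp: Aut_mem)
  then have b: "bij \<pi>" using permutes_bij by auto
  have "isometry_map (perm_word (inv \<pi>) x) (inv \<pi>) ` C =
        isometry_map (perm_word (inv \<pi>) x) (inv \<pi>) ` (isometry_map x \<pi> ` C)"
    using assms by (simp add: Aut_mem)
  also have "\<dots> = C" by (simp add: image_image iso_map_inv[OF b])
  finally show ?thesis using assms p by (auto simp: Aut_mem perm_word_Fn permutes_inv)
qed

lemma iso_sym: assumes "codes_isomorphic n C D" shows "codes_isomorphic n D C"
proof -
  obtain x \<pi> where h: "x \<in> Fn n" "\<pi> permutes {..<n}" "isometry_map x \<pi> ` C = D"
    using assms by (auto simp: codes_isomorphic_def)
  then have b: "bij \<pi>" using permutes_bij by auto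
  have "isometry_map (perm_word (inv \<pi>) x) (inv \<pi>) ` D = C"
    using h(3)[symmetric] by (simp add: image_image iso_map_inv[OF b])
  then show ?thesis using h by (auto simp: codes_isomorphic_def perm_word_Fn permutes_inv intro!: exI[of _ "perm_word (inv \<pi>) x"] exI[of _ "inv \<pi>"])
qed

lemma iso_trans: assumes "codes_isomorphic n C D" "codes_isomorphic n D G" shows "codes_isomorphic n C G"
proof -
  obtain x \<pi> where h: "x \<in> Fn n" "\<pi> permutes {..<n}" "isometry_map x \<pi> ` C = D"
    using assms by (auto simp: codes_isomorphic_def)
  obtain y \<rho> where g: "y \<in> Fn n" "\<rho> permutes {..<n}" "isometry_map y \<rho> ` D = G"
    using assms by (auto simp: codes_isomorphic_def)
  have b: "bij \<pi>" "bij \<rho>" using h g permutes_bij by auto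
  have "isometry_map (y \<oplus> perm_word \<rho> x) (\<rho> \<circ> \<pi>) ` C = G"
    using h(3) g(3) by (auto simp: image_image iso_map_comp[OF b(2,1)])
  then show ?thesis using h g by (auto simp: codes_isomorphic_def Fn_wadd perm_word_Fn permutes_compose
     intro!: exI[of _ "y \<oplus> perm_word \<rho> x"] exI[of _ "\<rho> \<circ> \<pi>"])
qed

section \<open>GF(2) dimension\<close>

definition subspace :: "word set \<Rightarrow> bool" where
  "subspace V \<longleftrightarrow> zero_word \<in> V \<and> (\<forall>x\<in>V. \<forall>y\<in>V. x \<oplus> y \<in> V)"

lemma sm_in: assumes "subspace V" "finite X" "X \<subseteq> V" shows "sm X \<in> V"
  using assms(2,3)
proof (induction X rule: finite_induct)
  case empty then show ?case using assms(1) by (simp add: subspace_def)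
next
  case (insert x F) then show ?case using assms(1) by (simp add: sm_insert subspace_def)
qed

lemma span_sub: "subspace V \<Longrightarrow> S \<subseteq> V \<Longrightarrow> gf2_span S \<subseteq> V"
  by (auto simp: gf2_span_def sm_def[symmetric] intro: sm_in)

lemma span_mem: "finite X \<Longrightarrow> X \<subseteq> S \<Longrightarrow> sm X \<in> gf2_span S"
  by (auto simp: gf2_span_def sm_def)

lemma span_eq: "gf2_span S = sm ` {X. finite X \<and> X \<subseteq> S}"
  by (auto simp: gf2_span_def sm_def)

lemma span_subspace: "subspace (gf2_span S)"
  unfolding subspace_def
proof (intro conjI ballI)
  show "zero_word \<in> gf2_span S" using span_mem[of "{}" S] by simp
  fix x y assume "x \<in> gf2_span S" "y \<in> gf2_span S"
  then obtain X Y where "finite X" "X \<subseteq> S" "x = sm X" "finite Y" "Y \<subseteq> S" "y = sm Y"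
    by (auto simp: span_eq)
  then show "x \<oplus> y \<in> gf2_span S"
    using sm_symdiff[of X Y] span_mem[of "(X - Y) \<union> (Y - X)" S] by auto
qed

lemma sm_single: "sm {x} = x" by (simp add: sm_insert)

lemma span_superset: "S \<subseteq> gf2_span S"
  using span_mem[of "{x}" S for x] by (auto simp: sm_single)

lemma span_mono: "S \<subseteq> T \<Longrightarrow> gf2_span S \<subseteq> gf2_span T"
  by (auto simp: gf2_span_def)

lemma span_self: "subspace V \<Longrightarrow> finite V \<Longrightarrow> gf2_span V = V"
  using span_sub[of V V] span_superset[of V] by auto

lemma dim_card: assumes "subspace V" "finite V" shows "card V = 2 ^ gf2_dim V"
proof -
  let ?P = "\<lambda>k. \<exists>B. B \<subseteq> V \<and> finite B \<and> card B = k \<and> gf2_span B = V"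
  have "?P (card V)" using assms span_self by blast
  then have "?P (gf2_dim V)" unfolding gf2_dim_def by (rule LeastI)
  then obtain B where B: "B \<subseteq> V" "finite B" "card B = gf2_dim V" "gf2_span B = V" by blast
  have sp: "gf2_span B = sm ` Pow B" using B(2) finite_subset by (auto simp: span_eq)
  show ?thesis
  proof (rule ccontr)
    assume ne: "card V \<noteq> 2 ^ gf2_dim V"
    have "card V \<le> card (Pow B)" unfolding B(4)[symmetric] sp by (rule card_image_le) (simp add: B(2))
    then have lt: "card (sm ` Pow B) < card (Pow B)" using ne B by (simp add: card_Pow sp)
    have "\<not> inj_on sm (Pow B)"
    proof
      assume "inj_on sm (Pow B)" then show False using lt by (simp add: card_image)
    qed
    then obtain X Y where XY: "X \<subseteq> B" "Y \<subseteq> B" "X \<noteq> Y" "sm X = sm Y" by (auto simp: inj_on_def)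
    let ?Z = "(X - Y) \<union> (Y - X)"
    have fX: "finite X" "finite Y" using XY B(2) finite_subset by auto
    have Z0: "sm ?Z = zero_word" using sm_symdiff[OF fX] XY by simp
    obtain b where b: "b \<in> ?Z" using XY by blast
    have fZ: "finite ?Z" using fX by simp
    have "?Z = insert b (?Z - {b})" using b by blast
    then have "sm ?Z = b \<oplus> sm (?Z - {b})" using sm_insert[of "?Z - {b}" b] fZ by (metis Diff_iff finite_Diff insertI1)
    then have bsm: "sm (?Z - {b}) = b" using Z0 by (metis wadd_lself wadd_zero(1))
    let ?B = "B - {b}"
    have bB: "b \<in> B" using b XY by auto
    have "gf2_span ?B = V"
    proof
      show "gf2_span ?B \<subseteq> V" using span_mono[of ?B B] B(4) by auto
      have "B \<subseteq> gf2_span ?B"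
      proof
        fix c assume c: "c \<in> B"
        show "c \<in> gf2_span ?B"
        proof (cases "c = b")
          case True
          have "?Z - {b} \<subseteq> ?B" using XY by auto
          then show ?thesis using span_mem[of "?Z - {b}" ?B] fZ bsm True by auto
        next
          case False then show ?thesis using c span_superset[of ?B] by auto
        qed
      qed
      then show "V \<subseteq> gf2_span ?B" using span_sub[OF span_subspace] B(4) by blast
    qed
    then have "?P (card ?B)" using B(1,2) by (intro exI[of _ ?B]) auto
    moreover have "card ?B < gf2_dim V" using B(2,3) bB by (metis card_Diff1_less)
    ultimately show False unfolding gf2_dim_def using not_less_Least by blast
  qed
qed

lemma dim_eq: assumes "subspace V" "finite V" "card V = 2 ^ k" shows "gf2_dim V = k"
  using dim_card[OF assms(1,2)] assms(3) by (simp add: power_inject_exp)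

section \<open>Invariants under isomorphism\<close>

lemma Fn_subspace: "subspace (Fn n)" by (simp add: subspace_def Fn_wadd)

lemma perm_word_inj: "bij \<pi> \<Longrightarrow> inj (perm_word \<pi>)"
  by (metis injI perm_word_inv)

lemma span_Fn: "S \<subseteq> Fn n \<Longrightarrow> gf2_span S \<subseteq> Fn n"
  by (rule span_sub[OF Fn_subspace])

lemma rank_iso: assumes iso: "codes_isomorphic n C D" and z: "zero_word \<in> C" "zero_word \<in> D"
  and CF: "C \<subseteq> Fn n"
  shows "code_rank C = code_rank D"
proof -
  obtain x \<pi> where h: "x \<in> Fn n" "\<pi> permutes {..<n}" "isometry_map x \<pi> ` C = D"
    using iso by (auto simp: codes_isomorphic_def)
  have b: "bij \<pi>" using h permutes_bij by auto
  let ?L = "perm_word \<pi>"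
  obtain c0 where c0: "c0 \<in> C" "isometry_map x \<pi> c0 = zero_word" using z h by auto
  have xL: "x = ?L c0" using c0 by (simp add: isometry_map_def) (metis wadd_lself wadd_zero(1))
  have DF: "D \<subseteq> Fn n" using h CF iso_map_Fn by auto
  have sub1: "subspace (?L ` gf2_span C)"
    using span_subspace[of C] unfolding subspace_def
    by (auto simp: perm_word_wadd[symmetric] intro!: image_eqI[of zero_word _ zero_word])
  have "D \<subseteq> ?L ` gf2_span C"
  proof
    fix d assume "d \<in> D"
    then obtain c where c: "c \<in> C" "d = isometry_map x \<pi> c" using h by auto
    then have "d = ?L (c0 \<oplus> c)" by (simp add: isometry_map_def xL perm_word_wadd)
    moreover have "c0 \<oplus> c \<in> gf2_span C"
      using span_subspace[of C] span_superset[of C] c c0 by (auto simp: subspace_def)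
    ultimately show "d \<in> ?L ` gf2_span C" by blast
  qed
  then have A: "gf2_span D \<subseteq> ?L ` gf2_span C" by (rule span_sub[OF sub1])
  let ?Q = "{w. ?L w \<in> gf2_span D}"
  have subQ: "subspace ?Q" using span_subspace[of D] by (auto simp: subspace_def perm_word_wadd)
  have "C \<subseteq> ?Q"
  proof
    fix c assume c: "c \<in> C"
    have "x \<in> D" using h z(1) by (metis image_eqI isometry_map_def perm_word_zero wadd_zero(1))
    moreover have "x \<oplus> ?L c \<in> D" using h c by (auto simp: isometry_map_def)
    ultimately have "x \<oplus> (x \<oplus> ?L c) \<in> gf2_span D"
      using span_subspace[of D] span_superset[of D] unfolding subspace_def by blast
    then show "c \<in> ?Q" by simp
  qed
  then have "gf2_span C \<subseteq> ?Q" by (rule span_sub[OF subQ])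
  then have "?L ` gf2_span C \<subseteq> gf2_span D" by auto
  with A have eq: "gf2_span D = ?L ` gf2_span C" by auto
  have "card (gf2_span D) = card (gf2_span C)"
    unfolding eq by (rule card_image) (meson inj_on_subset perm_word_inj[OF b] subset_UNIV)
  moreover have "finite (gf2_span C)" "finite (gf2_span D)"
    by (rule finite_subset[OF span_Fn[OF CF]], simp, rule finite_subset[OF span_Fn[OF DF]], simp)
  ultimately show ?thesis unfolding code_rank_def
    using dim_card[OF span_subspace] by (metis power_inject_exp one_less_numeral_iff semiring_norm(76))
qed

lemma kernel_sub: "code_kernel n C \<subseteq> Fn n" by (auto simp: code_kernel_def)

lemma kernel_subspace: "subspace (code_kernel n C)"
  unfolding subspace_def code_kernel_def code_shift_def
proof (intro conjI ballI)
  show "zero_word \<in> {x \<in> Fn n. (\<lambda>c. c \<oplus> x) ` C = C}" by simp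
  fix a b assume a: "a \<in> {x \<in> Fn n. (\<lambda>c. c \<oplus> x) ` C = C}" and b: "b \<in> {x \<in> Fn n. (\<lambda>c. c \<oplus> x) ` C = C}"
  have "(\<lambda>c. c \<oplus> (a \<oplus> b)) ` C = (\<lambda>c. c \<oplus> b) ` ((\<lambda>c. c \<oplus> a) ` C)"
    by (simp add: image_image wadd_assoc)
  also have "\<dots> = C" using a b by simp
  finally show "a \<oplus> b \<in> {x \<in> Fn n. (\<lambda>c. c \<oplus> x) ` C = C}" using a b by (simp add: Fn_wadd)
qed

lemma kernel_card_le: assumes iso: "codes_isomorphic n C D"
  shows "card (code_kernel n C) \<le> card (code_kernel n D)"
proof -
  obtain x \<pi> where h: "x \<in> Fn n" "\<pi> permutes {..<n}" "isometry_map x \<pi> ` C = D"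
    using iso by (auto simp: codes_isomorphic_def)
  have b: "bij \<pi>" using h permutes_bij by auto
  let ?L = "perm_word \<pi>"
  have "?L ` code_kernel n C \<subseteq> code_kernel n D"
  proof
    fix w assume "w \<in> ?L ` code_kernel n C"
    then obtain k where k: "k \<in> Fn n" "code_shift C k = C" "w = ?L k" by (auto simp: code_kernel_def)
    have "code_shift D w = isometry_map x \<pi> ` code_shift C k"
      unfolding h(3)[symmetric] code_shift_def image_image k(3)
      by (simp add: isometry_map_def perm_word_wadd wadd_assoc)
    then show "w \<in> code_kernel n D" using k h by (simp add: code_kernel_def perm_word_Fn)
  qed
  moreover have "card (?L ` code_kernel n C) = card (code_kernel n C)"
    by (rule card_image) (meson inj_on_subset perm_word_inj[OF b] subset_UNIV)
  moreover have "finite (code_kernel n D)" by (rule finite_subset[OF kernel_sub]) simp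
  ultimately show ?thesis by (metis card_mono)
qed

lemma kernel_dim_iso: assumes "codes_isomorphic n C D"
  shows "gf2_dim (code_kernel n C) = gf2_dim (code_kernel n D)"
proof -
  have "card (code_kernel n C) = card (code_kernel n D)"
    using kernel_card_le[OF assms] kernel_card_le[OF iso_sym[OF assms]] by simp
  moreover have "finite (code_kernel n C)" "finite (code_kernel n D)" by (rule finite_subset[OF kernel_sub], simp)+
  ultimately show ?thesis using dim_card[OF kernel_subspace]
    by (metis power_inject_exp one_less_numeral_iff semiring_norm(76))
qed

lemma trans_mono: "transitive_on n C X \<Longrightarrow> Y \<subseteq> X \<Longrightarrow> transitive_on n C Y"
  by (auto simp: transitive_on_def)

lemma trans_iso: assumes h: "x \<in> Fn n" "\<pi> permutes {..<n}" and t: "transitive_on n C X"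
  shows "transitive_on n (isometry_map x \<pi> ` C) (isometry_map x \<pi> ` X)"
  unfolding transitive_on_def
proof (intro ballI)
  have b: "bij \<pi>" using h permutes_bij by auto
  let ?\<phi> = "isometry_map x \<pi>"
  let ?xi = "perm_word (inv \<pi>) x"
  have binv: "bij (inv \<pi>)" using b by (simp add: bij_imp_bij_inv)
  fix u' v' assume "u' \<in> ?\<phi> ` X" "v' \<in> ?\<phi> ` X"
  then obtain u v where uv: "u \<in> X" "v \<in> X" "u' = ?\<phi> u" "v' = ?\<phi> v" by auto
  obtain g where g0: "g \<in> Aut n C" "(case g of (y, \<rho>) \<Rightarrow> isometry_map y \<rho> u = v)"
    using t uv unfolding transitive_on_def by blast
  obtain y \<rho> where g: "(y, \<rho>) \<in> Aut n C" "isometry_map y \<rho> u = v" using g0 by (cases g) auto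
  have gp: "y \<in> Fn n" "\<rho> permutes {..<n}" "isometry_map y \<rho> ` C = C" using g by (auto simp: Aut_mem)
  have br: "bij \<rho>" using gp permutes_bij by auto
  define z where "z = x \<oplus> perm_word \<pi> (y \<oplus> perm_word \<rho> ?xi)"
  define \<sigma> where "\<sigma> = \<pi> \<circ> (\<rho> \<circ> inv \<pi>)"
  have bc: "bij (\<rho> \<circ> inv \<pi>)" using br binv bij_comp by blast
  have eqm: "isometry_map z \<sigma> w = ?\<phi> (isometry_map y \<rho> (isometry_map ?xi (inv \<pi>) w))" for w
    by (simp add: z_def \<sigma>_def iso_map_comp[OF br binv] iso_map_comp[OF b bc])
  have "(z, \<sigma>) \<in> Aut n (?\<phi> ` C)"
  proof -
    have "isometry_map z \<sigma> ` (?\<phi> ` C) = ?\<phi> ` C"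
      by (simp add: image_image eqm iso_map_inv[OF b]) (metis gp(3) image_image)
    moreover have "z \<in> Fn n" using h gp by (simp add: z_def Fn_wadd perm_word_Fn permutes_inv)
    moreover have "\<sigma> permutes {..<n}" using h gp by (simp add: \<sigma>_def permutes_compose permutes_inv)
    ultimately show ?thesis by (simp add: Aut_mem)
  qed
  moreover have "isometry_map z \<sigma> u' = v'" using uv g by (simp add: eqm iso_map_inv[OF b])
  ultimately show "\<exists>(z, \<sigma>)\<in>Aut n (?\<phi> ` C). isometry_map z \<sigma> u' = v'" by blast
qed

lemma nbr_iso: assumes h: "x \<in> Fn n" "\<pi> permutes {..<n}"
  shows "neighbors n (isometry_map x \<pi> ` C) \<subseteq> isometry_map x \<pi> ` neighbors n C"
proof
  have b: "bij \<pi>" using h permutes_bij by auto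
  let ?\<phi> = "isometry_map x \<pi>"
  let ?\<psi> = "isometry_map (perm_word (inv \<pi>) x) (inv \<pi>)"
  have pp: "?\<phi> (?\<psi> w) = w" for w
  proof -
    have "?\<psi> (?\<phi> (?\<psi> w)) = ?\<psi> w" by (simp add: iso_map_inv[OF b])
    then show ?thesis using iso_map_inj[of "inv \<pi>" "perm_word (inv \<pi>) x"] b
      by (simp add: bij_imp_bij_inv inj_eq)
  qed
  fix u' assume u': "u' \<in> neighbors n (?\<phi> ` C)"
  then obtain d where d: "u' \<in> Fn n" "u' \<notin> ?\<phi> ` C" "d \<in> ?\<phi> ` C" "hdist n u' d = 1"
    by (auto simp: neighbors_def)
  obtain c where c: "c \<in> C" "d = ?\<phi> c" using d by auto
  let ?u = "?\<psi> u'"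
  have "?u \<in> Fn n" using d h by (simp add: iso_map_Fn perm_word_Fn permutes_inv)
  moreover have "?u \<notin> C" using d pp by (metis image_eqI)
  moreover have "hdist n ?u c = 1" using d c pp hdist_iso[OF h(2), of x ?u c] by simp
  ultimately have "?u \<in> neighbors n C" using c by (auto simp: neighbors_def)
  then show "u' \<in> ?\<phi> ` neighbors n C" using pp by (metis image_eqI)
qed

lemma NT_iso: assumes "codes_isomorphic n C D" "neighbor_transitive n C"
  shows "neighbor_transitive n D"
proof -
  obtain x \<pi> where h: "x \<in> Fn n" "\<pi> permutes {..<n}" "isometry_map x \<pi> ` C = D"
    using assms by (auto simp: codes_isomorphic_def)
  have "transitive_on n D D" using trans_iso[OF h(1,2)] assms(2) h(3) by (auto simp: neighbor_transitive_def)
  moreover have "transitive_on n D (neighbors n D)"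
    using trans_iso[OF h(1,2), of C "neighbors n C"] assms(2) h(3) nbr_iso[OF h(1,2), of C]
    by (auto simp: neighbor_transitive_def intro: trans_mono)
  ultimately show ?thesis by (simp add: neighbor_transitive_def)
qed

section \<open>Block isometries\<close>

definition linperm :: "(nat \<Rightarrow> nat) \<Rightarrow> bool" where
  "linperm A \<longleftrightarrow> A permutes {..<8} \<and> (\<forall>x<8. \<forall>y<8. A (xor x y) = xor (A x) (A y))"

lemma linperm_0: "linperm A \<Longrightarrow> A 0 = 0"
  unfolding linperm_def by (metis xor_self_eq zero_less_numeral)

lemma linperm_lt: "linperm A \<Longrightarrow> x < 8 \<Longrightarrow> A x < 8"
  unfolding linperm_def using permutes_in_image by fastforce

lemma endo_permutes: assumes "finite S" "\<And>x. x \<in> S \<Longrightarrow> f x \<in> S" "inj_on f S" "\<And>x. x \<notin> S \<Longrightarrow> f x = x"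
  shows "f permutes S"
proof -
  have "f ` S \<subseteq> S" using assms(2) by auto
  then have "f ` S = S" using assms(1,3) by (simp add: endo_inj_surj)
  then have "bij_betw f S S" using assms(3) by (simp add: bij_betw_def)
  then show ?thesis using assms(4) by (rule bij_imp_permutes)
qed

lemma lin_lt8: "c1 < 8 \<Longrightarrow> c2 < 8 \<Longrightarrow> c4 < 8 \<Longrightarrow> x < 8 \<Longrightarrow> lin c1 c2 c4 x < 8"
  by (simp add: lin_def xor_lt8)

lemma xor_eq0: "xor (a::nat) b = 0 \<Longrightarrow> a = b"
  by (metis xor_left_self_nat xor.right_neutral)

lemma xor_right_self_nat: "xor (xor (a::nat) t) t = a"
  by (simp add: xor.assoc)

lemma xor_cancel_r: "xor (a::nat) t = xor b t \<Longrightarrow> a = b"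
  by (metis xor_right_self_nat)

lemma lin_perm: assumes c: "c1 < 8" "c2 < 8" "c4 < 8" "c1 \<noteq> 0" "c2 \<noteq> 0" "c4 \<noteq> 0"
  "c1 \<noteq> c2" "c1 \<noteq> c4" "c2 \<noteq> c4" "xor c1 c2 \<noteq> c4"
  shows "linperm (lin c1 c2 c4)"
proof -
  have k: "z < 8 \<Longrightarrow> lin c1 c2 c4 z = 0 \<Longrightarrow> z = 0" for z
    unfolding lt8_cases using c
    by (auto simp: lin_def dest!: xor_eq0)
  have inj: "inj_on (lin c1 c2 c4) {..<8}"
  proof (rule inj_onI)
    fix x y assume xy: "x \<in> {..<8}" "y \<in> {..<8}" "lin c1 c2 c4 x = lin c1 c2 c4 y"
    then have "lin c1 c2 c4 (xor x y) = 0" using lin_linear[of x y] by simp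
    then have "xor x y = 0" using k xy xor_lt8 by auto
    then show "x = y" by (rule xor_eq0)
  qed
  have "lin c1 c2 c4 permutes {..<8}"
    by (rule endo_permutes) (use c inj lin_lt8 in \<open>auto simp: lin_def\<close>)
  then show ?thesis by (simp add: linperm_def lin_linear)
qed

definition aff :: "(nat \<Rightarrow> nat) \<Rightarrow> nat \<Rightarrow> nat \<Rightarrow> nat" where
  "aff A t p = (if p < 8 then xor (A p) t else p)"

lemma aff_permutes: assumes "linperm A" "t < 8" shows "aff A t permutes {..<8}"
proof (rule endo_permutes)
  show "inj_on (aff A t) {..<8}"
  proof (rule inj_onI)
    fix x y assume "x \<in> {..<8}" "y \<in> {..<8}" "aff A t x = aff A t y"
    then have "A x = A y" "x < 8" "y < 8" by (auto simp: aff_def dest: xor_cancel_r)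
    then show "x = y" using assms(1) unfolding linperm_def by (meson permutes_inj inj_eq)
  qed
qed (use assms linperm_lt xor_lt8 in \<open>auto simp: aff_def\<close>)

lemma vsum_aff: assumes A: "linperm A" and t: "t < 8" and S: "S \<subseteq> {..<8}"
  shows "vsum (aff A t ` S) = xor (A (vsum S)) (if odd (card S) then t else 0)"
proof -
  have fS: "finite S" using S finite_subset by blast
  have inj: "inj_on (aff A t) {..<8}" using aff_permutes[OF A t] permutes_inj by (metis inj_on_subset subset_UNIV)
  show ?thesis using fS S
  proof (induction S rule: finite_induct)
    case empty then show ?case using linperm_0[OF A] by simp
  next
    case (insert x F)
    have x8: "x < 8" using insert by auto
    have nx: "aff A t x \<notin> aff A t ` F" using insert inj by (auto simp: inj_on_def)
    have vF: "vsum F < 8" using insert vsum_lt8 by auto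
    have "vsum (aff A t ` insert x F) = xor (xor (A x) t) (vsum (aff A t ` F))"
      using insert nx x8 by (simp add: vsum_insert aff_def)
    also have "\<dots> = xor (xor (A x) t) (xor (A (vsum F)) (if odd (card F) then t else 0))"
      using insert by simp
    also have "\<dots> = xor (A (vsum (insert x F))) (if odd (card (insert x F)) then t else 0)"
      using insert A x8 vF unfolding linperm_def by (auto simp: vsum_insert xor_ac)
    finally show ?case .
  qed
qed

lemma syn_perm: assumes A: "linperm A" and t: "t < 8" and u: "u \<in> Fn 8" "even (wt 8 u)"
  shows "syn (perm_word (aff A t) u) = A (syn u)"
  using vsum_aff[OF A t supp_sub] u(2)
  by (simp add: syn_def supp_perm[OF aff_permutes[OF A t]] wt_supp)

lemma fib8_perm: assumes A: "linperm A" and t: "t < 8" and u: "u \<in> fib8 p"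
  shows "perm_word (aff A t) u \<in> fib8 (A p)"
  using u syn_perm[OF A t] perm_word_Fn[OF aff_permutes[OF A t]] wt_perm[OF aff_permutes[OF A t]]
  by (auto simp: fib8_def)

definition pi2 :: "(nat \<Rightarrow> nat) \<Rightarrow> (nat \<Rightarrow> nat) \<Rightarrow> nat \<Rightarrow> nat" where
  "pi2 \<alpha> \<beta> i = (if i < 8 then \<alpha> i else if i < 16 then \<beta> (i - 8) + 8 else i)"

lemma pi2_comp: assumes "\<alpha> permutes {..<8}" "\<beta> permutes {..<8}" "\<alpha>' permutes {..<8}" "\<beta>' permutes {..<8}"
  shows "pi2 \<alpha> \<beta> \<circ> pi2 \<alpha>' \<beta>' = pi2 (\<alpha> \<circ> \<alpha>') (\<beta> \<circ> \<beta>')"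
proof
  fix i
  have a: "x < 8 \<Longrightarrow> \<alpha>' x < 8" "x < 8 \<Longrightarrow> \<beta>' x < 8" for x
    using permutes_in_image[OF assms(3)] permutes_in_image[OF assms(4)] by auto
  show "(pi2 \<alpha> \<beta> \<circ> pi2 \<alpha>' \<beta>') i = pi2 (\<alpha> \<circ> \<alpha>') (\<beta> \<circ> \<beta>') i"
    using a[of i] a[of "i - 8"] by (auto simp: pi2_def)
qed

lemma pi2_id: "pi2 id id = id" by (auto simp: pi2_def fun_eq_iff)

lemma pi2_inv: assumes "\<alpha> permutes {..<8}" "\<beta> permutes {..<8}"
  shows "inv (pi2 \<alpha> \<beta>) = pi2 (inv \<alpha>) (inv \<beta>)"
proof (rule inv_unique_comp)
  have i: "inv \<alpha> permutes {..<8}" "inv \<beta> permutes {..<8}" using assms permutes_inv by auto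
  show "pi2 \<alpha> \<beta> \<circ> pi2 (inv \<alpha>) (inv \<beta>) = id"
    by (simp add: pi2_comp[OF assms i] permutes_inv_o[OF assms(1)] permutes_inv_o[OF assms(2)] pi2_id)
  show "pi2 (inv \<alpha>) (inv \<beta>) \<circ> pi2 \<alpha> \<beta> = id"
    by (simp add: pi2_comp[OF i assms] permutes_inv_o[OF assms(1)] permutes_inv_o[OF assms(2)] pi2_id)
qed

lemma pi2_permutes: assumes "\<alpha> permutes {..<8}" "\<beta> permutes {..<8}" shows "pi2 \<alpha> \<beta> permutes {..<16}"
proof (rule endo_permutes)
  have a: "x < 8 \<Longrightarrow> \<alpha> x < 8" "x < 8 \<Longrightarrow> \<beta> x < 8" for x
    using permutes_in_image[OF assms(1)] permutes_in_image[OF assms(2)] by auto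
  show "x \<in> {..<16} \<Longrightarrow> pi2 \<alpha> \<beta> x \<in> {..<16}" for x using a[of x] a[of "x - 8"] by (auto simp: pi2_def)
  have "inj (pi2 \<alpha> \<beta>)"
    using pi2_comp[OF permutes_inv[OF assms(1)] permutes_inv[OF assms(2)] assms] 
    by (metis inj_on_id inj_on_imageI2 permutes_inv_o(2) assms pi2_id image_comp)
  then show "inj_on (pi2 \<alpha> \<beta>) {..<16}" by (metis inj_on_subset subset_UNIV)
qed (auto simp: pi2_def)

lemma perm_pi2: assumes "\<alpha> permutes {..<8}" "\<beta> permutes {..<8}"
  shows "perm_word (pi2 \<alpha> \<beta>) (wconcat 8 u v) = wconcat 8 (perm_word \<alpha> u) (perm_word \<beta> v)"
proof
  fix i
  have a: "x < 8 \<Longrightarrow> inv \<alpha> x < 8" "x < 8 \<Longrightarrow> inv \<beta> x < 8" "x \<ge> 8 \<Longrightarrow> inv \<beta> x = x" for x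
    using permutes_in_image[OF permutes_inv[OF assms(1)]] permutes_in_image[OF permutes_inv[OF assms(2)]]
      permutes_not_in[OF permutes_inv[OF assms(2)]] by auto
  show "perm_word (pi2 \<alpha> \<beta>) (wconcat 8 u v) i = wconcat 8 (perm_word \<alpha> u) (perm_word \<beta> v) i"
    using a[of i] a[of "i - 8"] by (auto simp: perm_word_def pi2_inv[OF assms] pi2_def wconcat_def)
qed

lemma blk_fib: assumes A: "linperm A" and B: "linperm B" and t: "t1 < 8" "t2 < 8"
  and x: "xl \<in> fib8 a" "xr \<in> fib8 b" and pq: "p < 8" "q < 8"
  shows "isometry_map (wconcat 8 xl xr) (pi2 (aff A t1) (aff B t2)) ` fib (p, q) = fib (xor (A p) a, xor (B q) b)"
proof -
  let ?\<phi> = "isometry_map (wconcat 8 xl xr) (pi2 (aff A t1) (aff B t2))"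
  have pa: "aff A t1 permutes {..<8}" "aff B t2 permutes {..<8}" using aff_permutes A B t by auto
  have sub: "?\<phi> ` fib (p, q) \<subseteq> fib (xor (A p) a, xor (B q) b)"
  proof
    fix w assume "w \<in> ?\<phi> ` fib (p, q)"
    then obtain u v where uv: "u \<in> fib8 p" "v \<in> fib8 q" "w = ?\<phi> (wconcat 8 u v)" by (auto simp: fib_mem)
    have "w = wconcat 8 (xl \<oplus> perm_word (aff A t1) u) (xr \<oplus> perm_word (aff B t2) v)"
      using uv by (simp add: isometry_map_def perm_pi2[OF pa] wconcat_wadd)
    moreover have "xl \<oplus> perm_word (aff A t1) u \<in> fib8 (xor (A p) a)"
      using fib8_wadd[OF x(1) fib8_perm[OF A t(1) uv(1)]] by (simp add: xor.commute)
    moreover have "xr \<oplus> perm_word (aff B t2) v \<in> fib8 (xor (B q) b)"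
      using fib8_wadd[OF x(2) fib8_perm[OF B t(2) uv(2)]] by (simp add: xor.commute)
    ultimately show "w \<in> fib (xor (A p) a, xor (B q) b)" by (auto simp: fib_mem)
  qed
  have bij: "bij (pi2 (aff A t1) (aff B t2))" using pi2_permutes[OF pa] permutes_bij by blast
  have ab: "a < 8" "b < 8" using x fib8_syn syn_lt8 by metis+
  have "card (?\<phi> ` fib (p, q)) = card (fib (p, q))"
    by (rule card_image) (meson inj_on_subset iso_map_inj[OF bij] subset_UNIV)
  also have "\<dots> = card (fib (xor (A p) a, xor (B q) b))"
    using pq ab linperm_lt[OF A] linperm_lt[OF B] by (simp add: card_fib xor_lt8)
  finally show ?thesis using sub by (intro card_subset_eq) auto
qed

lemma blk_PW: assumes A: "linperm A" and B: "linperm B" and t: "t1 < 8" "t2 < 8"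
  and x: "xl \<in> fib8 a" "xr \<in> fib8 b" and W: "W \<subseteq> {..<8} \<times> {..<8}"
  shows "isometry_map (wconcat 8 xl xr) (pi2 (aff A t1) (aff B t2)) ` PW W
       = PW ((\<lambda>(p, q). (xor (A p) a, xor (B q) b)) ` W)"
proof -
  have "isometry_map (wconcat 8 xl xr) (pi2 (aff A t1) (aff B t2)) ` PW W =
     (\<Union>v\<in>W. isometry_map (wconcat 8 xl xr) (pi2 (aff A t1) (aff B t2)) ` fib v)"
    by (simp add: PW_def image_UN)
  also have "\<dots> = (\<Union>v\<in>W. fib ((\<lambda>(p, q). (xor (A p) a, xor (B q) b)) v))"
  proof (rule SUP_cong[OF refl])
    fix v assume "v \<in> W"
    then obtain p q where "v = (p, q)" "p < 8" "q < 8" using W by auto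
    then show "isometry_map (wconcat 8 xl xr) (pi2 (aff A t1) (aff B t2)) ` fib v =
      fib ((\<lambda>(p, q). (xor (A p) a, xor (B q) b)) v)" by (simp add: blk_fib[OF A B t x])
  qed
  also have "\<dots> = PW ((\<lambda>(p, q). (xor (A p) a, xor (B q) b)) ` W)" by (simp add: PW_def)
  finally show ?thesis .
qed

lemma blk_ok: assumes A: "linperm A" and B: "linperm B" and t: "t1 < 8" "t2 < 8"
  and x: "xl \<in> fib8 a" "xr \<in> fib8 b"
  shows "wconcat 8 xl xr \<in> Fn 16" "pi2 (aff A t1) (aff B t2) permutes {..<16}"
  using x by (auto simp: fib8_def wconcat_Fn intro!: pi2_permutes aff_permutes A B t)

definition sw :: "nat \<Rightarrow> nat" where
  "sw i = (if i < 8 then i + 8 else if i < 16 then i - 8 else i)"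

lemma sw_sw: "sw \<circ> sw = id" by (auto simp: sw_def fun_eq_iff)

lemma sw_permutes: "sw permutes {..<16}"
proof (rule endo_permutes)
  show "inj_on sw {..<16}" by (auto simp: inj_on_def sw_def split: if_splits)
qed (auto simp: sw_def)

lemma perm_sw: assumes "u \<in> Fn 8" "v \<in> Fn 8" shows "perm_word sw (wconcat 8 u v) = wconcat 8 v u"
proof -
  have "inv sw = sw" using sw_sw by (metis inv_unique_comp)
  then show ?thesis using assms by (auto simp: perm_word_def sw_def wconcat_def fun_eq_iff Fn_def)
qed

lemma sw_fib: "isometry_map zero_word sw ` fib (p, q) = fib (q, p)"
proof
  show "isometry_map zero_word sw ` fib (p, q) \<subseteq> fib (q, p)"
    apply (auto simp: fib_mem isometry_map_def perm_sw fib8_def)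
    apply blast
    done
  show "fib (q, p) \<subseteq> isometry_map zero_word sw ` fib (p, q)"
  proof
    fix w assume "w \<in> fib (q, p)"
    then obtain a b where ab: "w = wconcat 8 a b" "a \<in> fib8 q" "b \<in> fib8 p" by (auto simp: fib_mem)
    then have "w = isometry_map zero_word sw (wconcat 8 b a)"
      by (simp add: isometry_map_def perm_sw fib8_def)
    moreover have "wconcat 8 b a \<in> fib (p, q)" using ab by (auto simp: fib_mem)
    ultimately show "w \<in> isometry_map zero_word sw ` fib (p, q)" by blast
  qed
qed

lemma sw_PW: "isometry_map zero_word sw ` PW W = PW ((\<lambda>(p, q). (q, p)) ` W)"
proof -
  have "isometry_map zero_word sw ` PW W = (\<Union>v\<in>W. isometry_map zero_word sw ` fib v)"
    by (simp add: PW_def image_UN)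
  also have "\<dots> = (\<Union>v\<in>W. fib ((\<lambda>(p, q). (q, p)) v))"
  proof (rule SUP_cong[OF refl])
    fix v :: "nat \<times> nat" obtain a b where "v = (a, b)" by (cases v)
    then show "isometry_map zero_word sw ` fib v = fib ((\<lambda>(p, q). (q, p)) v)" by (simp add: sw_fib)
  qed
  also have "\<dots> = PW ((\<lambda>(p, q). (q, p)) ` W)" by (auto simp: PW_def)
  finally show ?thesis .
qed

section \<open>Isomorphisms between the codes\<close>

lemma fib8_zero': "zero_word \<in> fib8 0" by (rule fib8_zero)

lemma gl_iso: assumes A: "linperm A" and B: "linperm B" and fg: "\<And>y. y < 8 \<Longrightarrow> g (A y) = B (f y)"
  and f8: "\<And>y. y < 8 \<Longrightarrow> f y < 8"
  shows "codes_isomorphic 16 (PW (graph f)) (PW (graph g))"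
proof -
  have t: "(0::nat) < 8" by simp
  have "isometry_map (wconcat 8 zero_word zero_word) (pi2 (aff A 0) (aff B 0)) ` PW (graph f)
      = PW ((\<lambda>(p, q). (xor (A p) 0, xor (B q) 0)) ` graph f)"
    by (rule blk_PW[OF A B t t fib8_zero fib8_zero graph_sub[OF f8]])
  also have "(\<lambda>(p, q). (xor (A p) 0, xor (B q) 0)) ` graph f = (\<lambda>z. (z, g z)) ` (A ` {..<8})"
    using fg by (auto simp: graph_def image_image)
  also have "A ` {..<8} = {..<8}" using A by (simp add: linperm_def permutes_image)
  finally have "isometry_map (wconcat 8 zero_word zero_word) (pi2 (aff A 0) (aff B 0)) ` PW (graph f)
      = PW (graph g)" by (simp add: graph_def)
  then show ?thesis unfolding codes_isomorphic_def using blk_ok[OF A B t t fib8_zero fib8_zero] by blast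
qed

lemma gl_iso_conc: assumes A: "linperm A" and B: "linperm B"
  and "g (A 0) = B (f 0)" "g (A 1) = B (f 1)" "g (A 2) = B (f 2)" "g (A 3) = B (f 3)"
      "g (A 4) = B (f 4)" "g (A 5) = B (f 5)" "g (A 6) = B (f 6)" "g (A 7) = B (f 7)"
  and "f 0 < 8" "f 1 < 8" "f 2 < 8" "f 3 < 8" "f 4 < 8" "f 5 < 8" "f 6 < 8" "f 7 < 8"
  shows "codes_isomorphic 16 (PW (graph f)) (PW (graph g))"
proof (rule gl_iso[OF A B])
  fix y :: nat assume "y < 8"
  then have "y = 0 \<or> y = 1 \<or> y = 2 \<or> y = 3 \<or> y = 4 \<or> y = 5 \<or> y = 6 \<or> y = 7" by (simp only: lt8_cases)
  then show "g (A y) = B (f y)" "f y < 8" using assms(3-18) by (elim disjE; simp)+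
qed

definition rep11 :: "nat \<Rightarrow> nat" where "rep11 x = x"
definition rep12 :: "nat \<Rightarrow> nat" where "rep12 x = (if x = 6 then 7 else if x = 7 then 6 else x)"
definition rep13 :: "nat \<Rightarrow> nat" where "rep13 x = (if x = 5 then 6 else if x = 6 then 7 else if x = 7 then 5 else x)"
definition rep14 :: "nat \<Rightarrow> nat" where
  "rep14 x = (if x = 3 then 5 else if x = 5 then 6 else if x = 6 then 7 else if x = 7 then 3 else x)"

definition repf :: "nat \<Rightarrow> nat \<Rightarrow> nat" where
  "repf r = (if r = 11 then rep11 else if r = 12 then rep12 else if r = 13 then rep13 else rep14)"

lemma nf1: assumes "f 0 = 0" and "f 1 = 1" and "f 2 = 2" and "f 3 = 3" and "f 4 = 4" and "f 5 = 5" and "f 6 = 6" and "f 7 = 7"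
  shows "codes_isomorphic 16 (PW (graph f)) (PW (graph rep11))"
  by (rule gl_iso_conc[OF lin_perm[of 1 2 4] lin_perm[of 1 2 4]])
     (unfold assms, simp_all add: lin_def rep11_def)

lemma nf2: assumes "f 0 = 0" and "f 1 = 1" and "f 2 = 2" and "f 3 = 3" and "f 4 = 4" and "f 5 = 5" and "f 6 = 7" and "f 7 = 6"
  shows "codes_isomorphic 16 (PW (graph f)) (PW (graph rep12))"
  by (rule gl_iso_conc[OF lin_perm[of 1 2 4] lin_perm[of 1 2 4]])
     (unfold assms, simp_all add: lin_def rep12_def)

lemma nf3: assumes "f 0 = 0" and "f 1 = 1" and "f 2 = 2" and "f 3 = 3" and "f 4 = 4" and "f 5 = 6" and "f 6 = 5" and "f 7 = 7"
  shows "codes_isomorphic 16 (PW (graph f)) (PW (graph rep12))"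
  by (rule gl_iso_conc[OF lin_perm[of 2 3 4] lin_perm[of 2 3 4]])
     (unfold assms, simp_all add: lin_def rep12_def)

lemma nf4: assumes "f 0 = 0" and "f 1 = 1" and "f 2 = 2" and "f 3 = 3" and "f 4 = 4" and "f 5 = 7" and "f 6 = 6" and "f 7 = 5"
  shows "codes_isomorphic 16 (PW (graph f)) (PW (graph rep12))"
  by (rule gl_iso_conc[OF lin_perm[of 2 1 4] lin_perm[of 2 1 4]])
     (unfold assms, simp_all add: lin_def rep12_def)

lemma nf5: assumes "f 0 = 0" and "f 1 = 1" and "f 2 = 2" and "f 3 = 5" and "f 4 = 4" and "f 5 = 3" and "f 6 = 6" and "f 7 = 7"
  shows "codes_isomorphic 16 (PW (graph f)) (PW (graph rep12))"
  by (rule gl_iso_conc[OF lin_perm[of 2 4 5] lin_perm[of 2 4 5]])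
     (unfold assms, simp_all add: lin_def rep12_def)

lemma nf6: assumes "f 0 = 0" and "f 1 = 1" and "f 2 = 2" and "f 3 = 6" and "f 4 = 4" and "f 5 = 5" and "f 6 = 3" and "f 7 = 7"
  shows "codes_isomorphic 16 (PW (graph f)) (PW (graph rep12))"
  by (rule gl_iso_conc[OF lin_perm[of 2 4 3] lin_perm[of 2 4 3]])
     (unfold assms, simp_all add: lin_def rep12_def)

lemma nf7: assumes "f 0 = 0" and "f 1 = 1" and "f 2 = 2" and "f 3 = 7" and "f 4 = 4" and "f 5 = 5" and "f 6 = 6" and "f 7 = 3"
  shows "codes_isomorphic 16 (PW (graph f)) (PW (graph rep12))"
  by (rule gl_iso_conc[OF lin_perm[of 2 4 1] lin_perm[of 2 4 1]])
     (unfold assms, simp_all add: lin_def rep12_def)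

lemma nf8: assumes "f 0 = 0" and "f 1 = 1" and "f 2 = 2" and "f 3 = 3" and "f 4 = 4" and "f 5 = 6" and "f 6 = 7" and "f 7 = 5"
  shows "codes_isomorphic 16 (PW (graph f)) (PW (graph rep13))"
  by (rule gl_iso_conc[OF lin_perm[of 1 2 4] lin_perm[of 1 2 4]])
     (unfold assms, simp_all add: lin_def rep13_def)

lemma nf9: assumes "f 0 = 0" and "f 1 = 1" and "f 2 = 2" and "f 3 = 3" and "f 4 = 4" and "f 5 = 7" and "f 6 = 5" and "f 7 = 6"
  shows "codes_isomorphic 16 (PW (graph f)) (PW (graph rep13))"
  by (rule gl_iso_conc[OF lin_perm[of 1 3 4] lin_perm[of 1 3 4]])
     (unfold assms, simp_all add: lin_def rep13_def)

lemma nf10: assumes "f 0 = 0" and "f 1 = 1" and "f 2 = 2" and "f 3 = 5" and "f 4 = 4" and "f 5 = 3" and "f 6 = 7" and "f 7 = 6"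
  shows "codes_isomorphic 16 (PW (graph f)) (PW (graph rep13))"
  by (rule gl_iso_conc[OF lin_perm[of 1 4 6] lin_perm[of 1 4 7]])
     (unfold assms, simp_all add: lin_def rep13_def)

lemma nf11: assumes "f 0 = 0" and "f 1 = 1" and "f 2 = 2" and "f 3 = 5" and "f 4 = 4" and "f 5 = 6" and "f 6 = 3" and "f 7 = 7"
  shows "codes_isomorphic 16 (PW (graph f)) (PW (graph rep13))"
  by (rule gl_iso_conc[OF lin_perm[of 4 5 7] lin_perm[of 4 6 5]])
     (unfold assms, simp_all add: lin_def rep13_def)

lemma nf12: assumes "f 0 = 0" and "f 1 = 1" and "f 2 = 2" and "f 3 = 5" and "f 4 = 4" and "f 5 = 7" and "f 6 = 6" and "f 7 = 3"
  shows "codes_isomorphic 16 (PW (graph f)) (PW (graph rep13))"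
  by (rule gl_iso_conc[OF lin_perm[of 4 1 2] lin_perm[of 4 1 2]])
     (unfold assms, simp_all add: lin_def rep13_def)

lemma nf13: assumes "f 0 = 0" and "f 1 = 1" and "f 2 = 2" and "f 3 = 6" and "f 4 = 4" and "f 5 = 3" and "f 6 = 5" and "f 7 = 7"
  shows "codes_isomorphic 16 (PW (graph f)) (PW (graph rep13))"
  by (rule gl_iso_conc[OF lin_perm[of 4 5 6] lin_perm[of 4 6 7]])
     (unfold assms, simp_all add: lin_def rep13_def)

lemma nf14: assumes "f 0 = 0" and "f 1 = 1" and "f 2 = 2" and "f 3 = 6" and "f 4 = 4" and "f 5 = 5" and "f 6 = 7" and "f 7 = 3"
  shows "codes_isomorphic 16 (PW (graph f)) (PW (graph rep13))"
  by (rule gl_iso_conc[OF lin_perm[of 1 4 2] lin_perm[of 1 4 2]])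
     (unfold assms, simp_all add: lin_def rep13_def)

lemma nf15: assumes "f 0 = 0" and "f 1 = 1" and "f 2 = 2" and "f 3 = 6" and "f 4 = 4" and "f 5 = 7" and "f 6 = 3" and "f 7 = 5"
  shows "codes_isomorphic 16 (PW (graph f)) (PW (graph rep13))"
  by (rule gl_iso_conc[OF lin_perm[of 4 1 6] lin_perm[of 4 1 7]])
     (unfold assms, simp_all add: lin_def rep13_def)

lemma nf16: assumes "f 0 = 0" and "f 1 = 1" and "f 2 = 2" and "f 3 = 7" and "f 4 = 4" and "f 5 = 3" and "f 6 = 6" and "f 7 = 5"
  shows "codes_isomorphic 16 (PW (graph f)) (PW (graph rep13))"
  by (rule gl_iso_conc[OF lin_perm[of 4 1 3] lin_perm[of 4 1 3]])
     (unfold assms, simp_all add: lin_def rep13_def)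

lemma nf17: assumes "f 0 = 0" and "f 1 = 1" and "f 2 = 2" and "f 3 = 7" and "f 4 = 4" and "f 5 = 5" and "f 6 = 3" and "f 7 = 6"
  shows "codes_isomorphic 16 (PW (graph f)) (PW (graph rep13))"
  by (rule gl_iso_conc[OF lin_perm[of 1 4 3] lin_perm[of 1 4 3]])
     (unfold assms, simp_all add: lin_def rep13_def)

lemma nf18: assumes "f 0 = 0" and "f 1 = 1" and "f 2 = 2" and "f 3 = 7" and "f 4 = 4" and "f 5 = 6" and "f 6 = 5" and "f 7 = 3"
  shows "codes_isomorphic 16 (PW (graph f)) (PW (graph rep13))"
  by (rule gl_iso_conc[OF lin_perm[of 4 5 3] lin_perm[of 4 6 3]])
     (unfold assms, simp_all add: lin_def rep13_def)

lemma nf19: assumes "f 0 = 0" and "f 1 = 1" and "f 2 = 2" and "f 3 = 5" and "f 4 = 4" and "f 5 = 6" and "f 6 = 7" and "f 7 = 3"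
  shows "codes_isomorphic 16 (PW (graph f)) (PW (graph rep14))"
  by (rule gl_iso_conc[OF lin_perm[of 1 2 4] lin_perm[of 1 2 4]])
     (unfold assms, simp_all add: lin_def rep14_def)

lemma nf20: assumes "f 0 = 0" and "f 1 = 1" and "f 2 = 2" and "f 3 = 5" and "f 4 = 4" and "f 5 = 7" and "f 6 = 3" and "f 7 = 6"
  shows "codes_isomorphic 16 (PW (graph f)) (PW (graph rep14))"
  by (rule gl_iso_conc[OF lin_perm[of 1 3 7] lin_perm[of 1 5 3]])
     (unfold assms, simp_all add: lin_def rep14_def)

lemma nf21: assumes "f 0 = 0" and "f 1 = 1" and "f 2 = 2" and "f 3 = 6" and "f 4 = 4" and "f 5 = 3" and "f 6 = 7" and "f 7 = 5"
  shows "codes_isomorphic 16 (PW (graph f)) (PW (graph rep14))"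
  by (rule gl_iso_conc[OF lin_perm[of 1 2 6] lin_perm[of 1 2 7]])
     (unfold assms, simp_all add: lin_def rep14_def)

lemma nf22: assumes "f 0 = 0" and "f 1 = 1" and "f 2 = 2" and "f 3 = 6" and "f 4 = 4" and "f 5 = 7" and "f 6 = 5" and "f 7 = 3"
  shows "codes_isomorphic 16 (PW (graph f)) (PW (graph rep14))"
  by (rule gl_iso_conc[OF lin_perm[of 1 3 6] lin_perm[of 1 5 7]])
     (unfold assms, simp_all add: lin_def rep14_def)

lemma nf23: assumes "f 0 = 0" and "f 1 = 1" and "f 2 = 2" and "f 3 = 7" and "f 4 = 4" and "f 5 = 3" and "f 6 = 5" and "f 7 = 6"
  shows "codes_isomorphic 16 (PW (graph f)) (PW (graph rep14))"
  by (rule gl_iso_conc[OF lin_perm[of 1 3 5] lin_perm[of 1 5 6]])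
     (unfold assms, simp_all add: lin_def rep14_def)

lemma nf24: assumes "f 0 = 0" and "f 1 = 1" and "f 2 = 2" and "f 3 = 7" and "f 4 = 4" and "f 5 = 6" and "f 6 = 3" and "f 7 = 5"
  shows "codes_isomorphic 16 (PW (graph f)) (PW (graph rep14))"
  by (rule gl_iso_conc[OF lin_perm[of 1 2 5] lin_perm[of 1 2 6]])
     (unfold assms, simp_all add: lin_def rep14_def)

lemma nf_class: assumes p: "f permutes {..<8}" and h: "f 0 = 0" "f 1 = 1" "f 2 = 2" "f 4 = 4"
  shows "\<exists>r\<in>{11, 12, 13, 14::nat}. codes_isomorphic 16 (PW (graph f)) (PW (graph (repf r)))"
proof -
  have inj: "f x = f y \<longleftrightarrow> x = y" for x y using p by (meson permutes_inj inj_eq)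
  have lt: "x < 8 \<Longrightarrow> f x < 8" for x using permutes_in_image[OF p] by simp
  have v: "f x \<in> {3, 5, 6, 7}" if "x \<in> {3, 5, 6, 7::nat}" for x
  proof -
    have "f x < 8" using lt that by auto
    moreover have "f x \<noteq> 0" "f x \<noteq> 1" "f x \<noteq> 2" "f x \<noteq> 4"
      using that inj[of x 0] inj[of x 1] inj[of x 2] inj[of x 4] h by auto
    ultimately show ?thesis unfolding lt8_cases by auto
  qed
  have vals: "f 3 \<in> {3, 5, 6, 7}" "f 5 \<in> {3, 5, 6, 7}" "f 6 \<in> {3, 5, 6, 7}" "f 7 \<in> {3, 5, 6, 7}"
    "f 3 \<noteq> f 5" "f 3 \<noteq> f 6" "f 3 \<noteq> f 7" "f 5 \<noteq> f 6" "f 5 \<noteq> f 7" "f 6 \<noteq> f 7"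
    using v inj by auto
  have "f 3 = 3 \<or> f 3 = 5 \<or> f 3 = 6 \<or> f 3 = 7" using vals by simp
  then show ?thesis
  proof (elim disjE)
    assume a3: "f 3 = 3"
    have "f 5 = 3 \<or> f 5 = 5 \<or> f 5 = 6 \<or> f 5 = 7" using vals by simp
    then show ?thesis
    proof (elim disjE)
      assume a5: "f 5 = 3"
      then show ?thesis using vals a3 by simp
    next
      assume a5: "f 5 = 5"
      have "f 6 = 3 \<or> f 6 = 5 \<or> f 6 = 6 \<or> f 6 = 7" using vals by simp
      then show ?thesis
      proof (elim disjE)
        assume a6: "f 6 = 3"
        then show ?thesis using vals a3 by simp
      next
        assume a6: "f 6 = 5"
        then show ?thesis using vals a5 by simp
      next
        assume a6: "f 6 = 6"
        have "f 7 = 3 \<or> f 7 = 5 \<or> f 7 = 6 \<or> f 7 = 7" using vals by simp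
        then show ?thesis
        proof (elim disjE)
          assume a7: "f 7 = 3"
          then show ?thesis using vals a3 by simp
        next
          assume a7: "f 7 = 5"
          then show ?thesis using vals a5 by simp
        next
          assume a7: "f 7 = 6"
          then show ?thesis using vals a6 by simp
        next
          assume a7: "f 7 = 7"
          show ?thesis using nf1[of f] h a3 a5 a6 a7 by (intro bexI[of _ 11]) (auto simp: repf_def)
        qed
      next
        assume a6: "f 6 = 7"
        have "f 7 = 3 \<or> f 7 = 5 \<or> f 7 = 6 \<or> f 7 = 7" using vals by simp
        then show ?thesis
        proof (elim disjE)
          assume a7: "f 7 = 3"
          then show ?thesis using vals a3 by simp
        next
          assume a7: "f 7 = 5"
          then show ?thesis using vals a5 by simp
        next
          assume a7: "f 7 = 6"
          show ?thesis using nf2[of f] h a3 a5 a6 a7 by (intro bexI[of _ 12]) (auto simp: repf_def)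
        next
          assume a7: "f 7 = 7"
          then show ?thesis using vals a6 by simp
        qed
      qed
    next
      assume a5: "f 5 = 6"
      have "f 6 = 3 \<or> f 6 = 5 \<or> f 6 = 6 \<or> f 6 = 7" using vals by simp
      then show ?thesis
      proof (elim disjE)
        assume a6: "f 6 = 3"
        then show ?thesis using vals a3 by simp
      next
        assume a6: "f 6 = 5"
        have "f 7 = 3 \<or> f 7 = 5 \<or> f 7 = 6 \<or> f 7 = 7" using vals by simp
        then show ?thesis
        proof (elim disjE)
          assume a7: "f 7 = 3"
          then show ?thesis using vals a3 by simp
        next
          assume a7: "f 7 = 5"
          then show ?thesis using vals a6 by simp
        next
          assume a7: "f 7 = 6"
          then show ?thesis using vals a5 by simp
        next
          assume a7: "f 7 = 7"
          show ?thesis using nf3[of f] h a3 a5 a6 a7 by (intro bexI[of _ 12]) (auto simp: repf_def)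
        qed
      next
        assume a6: "f 6 = 6"
        then show ?thesis using vals a5 by simp
      next
        assume a6: "f 6 = 7"
        have "f 7 = 3 \<or> f 7 = 5 \<or> f 7 = 6 \<or> f 7 = 7" using vals by simp
        then show ?thesis
        proof (elim disjE)
          assume a7: "f 7 = 3"
          then show ?thesis using vals a3 by simp
        next
          assume a7: "f 7 = 5"
          show ?thesis using nf8[of f] h a3 a5 a6 a7 by (intro bexI[of _ 13]) (auto simp: repf_def)
        next
          assume a7: "f 7 = 6"
          then show ?thesis using vals a5 by simp
        next
          assume a7: "f 7 = 7"
          then show ?thesis using vals a6 by simp
        qed
      qed
    next
      assume a5: "f 5 = 7"
      have "f 6 = 3 \<or> f 6 = 5 \<or> f 6 = 6 \<or> f 6 = 7" using vals by simp
      then show ?thesis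
      proof (elim disjE)
        assume a6: "f 6 = 3"
        then show ?thesis using vals a3 by simp
      next
        assume a6: "f 6 = 5"
        have "f 7 = 3 \<or> f 7 = 5 \<or> f 7 = 6 \<or> f 7 = 7" using vals by simp
        then show ?thesis
        proof (elim disjE)
          assume a7: "f 7 = 3"
          then show ?thesis using vals a3 by simp
        next
          assume a7: "f 7 = 5"
          then show ?thesis using vals a6 by simp
        next
          assume a7: "f 7 = 6"
          show ?thesis using nf9[of f] h a3 a5 a6 a7 by (intro bexI[of _ 13]) (auto simp: repf_def)
        next
          assume a7: "f 7 = 7"
          then show ?thesis using vals a5 by simp
        qed
      next
        assume a6: "f 6 = 6"
        have "f 7 = 3 \<or> f 7 = 5 \<or> f 7 = 6 \<or> f 7 = 7" using vals by simp
        then show ?thesis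
        proof (elim disjE)
          assume a7: "f 7 = 3"
          then show ?thesis using vals a3 by simp
        next
          assume a7: "f 7 = 5"
          show ?thesis using nf4[of f] h a3 a5 a6 a7 by (intro bexI[of _ 12]) (auto simp: repf_def)
        next
          assume a7: "f 7 = 6"
          then show ?thesis using vals a6 by simp
        next
          assume a7: "f 7 = 7"
          then show ?thesis using vals a5 by simp
        qed
      next
        assume a6: "f 6 = 7"
        then show ?thesis using vals a5 by simp
      qed
    qed
  next
    assume a3: "f 3 = 5"
    have "f 5 = 3 \<or> f 5 = 5 \<or> f 5 = 6 \<or> f 5 = 7" using vals by simp
    then show ?thesis
    proof (elim disjE)
      assume a5: "f 5 = 3"
      have "f 6 = 3 \<or> f 6 = 5 \<or> f 6 = 6 \<or> f 6 = 7" using vals by simp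
      then show ?thesis
      proof (elim disjE)
        assume a6: "f 6 = 3"
        then show ?thesis using vals a5 by simp
      next
        assume a6: "f 6 = 5"
        then show ?thesis using vals a3 by simp
      next
        assume a6: "f 6 = 6"
        have "f 7 = 3 \<or> f 7 = 5 \<or> f 7 = 6 \<or> f 7 = 7" using vals by simp
        then show ?thesis
        proof (elim disjE)
          assume a7: "f 7 = 3"
          then show ?thesis using vals a5 by simp
        next
          assume a7: "f 7 = 5"
          then show ?thesis using vals a3 by simp
        next
          assume a7: "f 7 = 6"
          then show ?thesis using vals a6 by simp
        next
          assume a7: "f 7 = 7"
          show ?thesis using nf5[of f] h a3 a5 a6 a7 by (intro bexI[of _ 12]) (auto simp: repf_def)
        qed
      next
        assume a6: "f 6 = 7"
        have "f 7 = 3 \<or> f 7 = 5 \<or> f 7 = 6 \<or> f 7 = 7" using vals by simp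
        then show ?thesis
        proof (elim disjE)
          assume a7: "f 7 = 3"
          then show ?thesis using vals a5 by simp
        next
          assume a7: "f 7 = 5"
          then show ?thesis using vals a3 by simp
        next
          assume a7: "f 7 = 6"
          show ?thesis using nf10[of f] h a3 a5 a6 a7 by (intro bexI[of _ 13]) (auto simp: repf_def)
        next
          assume a7: "f 7 = 7"
          then show ?thesis using vals a6 by simp
        qed
      qed
    next
      assume a5: "f 5 = 5"
      then show ?thesis using vals a3 by simp
    next
      assume a5: "f 5 = 6"
      have "f 6 = 3 \<or> f 6 = 5 \<or> f 6 = 6 \<or> f 6 = 7" using vals by simp
      then show ?thesis
      proof (elim disjE)
        assume a6: "f 6 = 3"
        have "f 7 = 3 \<or> f 7 = 5 \<or> f 7 = 6 \<or> f 7 = 7" using vals by simp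
        then show ?thesis
        proof (elim disjE)
          assume a7: "f 7 = 3"
          then show ?thesis using vals a6 by simp
        next
          assume a7: "f 7 = 5"
          then show ?thesis using vals a3 by simp
        next
          assume a7: "f 7 = 6"
          then show ?thesis using vals a5 by simp
        next
          assume a7: "f 7 = 7"
          show ?thesis using nf11[of f] h a3 a5 a6 a7 by (intro bexI[of _ 13]) (auto simp: repf_def)
        qed
      next
        assume a6: "f 6 = 5"
        then show ?thesis using vals a3 by simp
      next
        assume a6: "f 6 = 6"
        then show ?thesis using vals a5 by simp
      next
        assume a6: "f 6 = 7"
        have "f 7 = 3 \<or> f 7 = 5 \<or> f 7 = 6 \<or> f 7 = 7" using vals by simp
        then show ?thesis
        proof (elim disjE)
          assume a7: "f 7 = 3"
          show ?thesis using nf19[of f] h a3 a5 a6 a7 by (intro bexI[of _ 14]) (auto simp: repf_def)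
        next
          assume a7: "f 7 = 5"
          then show ?thesis using vals a3 by simp
        next
          assume a7: "f 7 = 6"
          then show ?thesis using vals a5 by simp
        next
          assume a7: "f 7 = 7"
          then show ?thesis using vals a6 by simp
        qed
      qed
    next
      assume a5: "f 5 = 7"
      have "f 6 = 3 \<or> f 6 = 5 \<or> f 6 = 6 \<or> f 6 = 7" using vals by simp
      then show ?thesis
      proof (elim disjE)
        assume a6: "f 6 = 3"
        have "f 7 = 3 \<or> f 7 = 5 \<or> f 7 = 6 \<or> f 7 = 7" using vals by simp
        then show ?thesis
        proof (elim disjE)
          assume a7: "f 7 = 3"
          then show ?thesis using vals a6 by simp
        next
          assume a7: "f 7 = 5"
          then show ?thesis using vals a3 by simp
        next
          assume a7: "f 7 = 6"
          show ?thesis using nf20[of f] h a3 a5 a6 a7 by (intro bexI[of _ 14]) (auto simp: repf_def)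
        next
          assume a7: "f 7 = 7"
          then show ?thesis using vals a5 by simp
        qed
      next
        assume a6: "f 6 = 5"
        then show ?thesis using vals a3 by simp
      next
        assume a6: "f 6 = 6"
        have "f 7 = 3 \<or> f 7 = 5 \<or> f 7 = 6 \<or> f 7 = 7" using vals by simp
        then show ?thesis
        proof (elim disjE)
          assume a7: "f 7 = 3"
          show ?thesis using nf12[of f] h a3 a5 a6 a7 by (intro bexI[of _ 13]) (auto simp: repf_def)
        next
          assume a7: "f 7 = 5"
          then show ?thesis using vals a3 by simp
        next
          assume a7: "f 7 = 6"
          then show ?thesis using vals a6 by simp
        next
          assume a7: "f 7 = 7"
          then show ?thesis using vals a5 by simp
        qed
      next
        assume a6: "f 6 = 7"
        then show ?thesis using vals a5 by simp
      qed
    qed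
  next
    assume a3: "f 3 = 6"
    have "f 5 = 3 \<or> f 5 = 5 \<or> f 5 = 6 \<or> f 5 = 7" using vals by simp
    then show ?thesis
    proof (elim disjE)
      assume a5: "f 5 = 3"
      have "f 6 = 3 \<or> f 6 = 5 \<or> f 6 = 6 \<or> f 6 = 7" using vals by simp
      then show ?thesis
      proof (elim disjE)
        assume a6: "f 6 = 3"
        then show ?thesis using vals a5 by simp
      next
        assume a6: "f 6 = 5"
        have "f 7 = 3 \<or> f 7 = 5 \<or> f 7 = 6 \<or> f 7 = 7" using vals by simp
        then show ?thesis
        proof (elim disjE)
          assume a7: "f 7 = 3"
          then show ?thesis using vals a5 by simp
        next
          assume a7: "f 7 = 5"
          then show ?thesis using vals a6 by simp
        next
          assume a7: "f 7 = 6"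
          then show ?thesis using vals a3 by simp
        next
          assume a7: "f 7 = 7"
          show ?thesis using nf13[of f] h a3 a5 a6 a7 by (intro bexI[of _ 13]) (auto simp: repf_def)
        qed
      next
        assume a6: "f 6 = 6"
        then show ?thesis using vals a3 by simp
      next
        assume a6: "f 6 = 7"
        have "f 7 = 3 \<or> f 7 = 5 \<or> f 7 = 6 \<or> f 7 = 7" using vals by simp
        then show ?thesis
        proof (elim disjE)
          assume a7: "f 7 = 3"
          then show ?thesis using vals a5 by simp
        next
          assume a7: "f 7 = 5"
          show ?thesis using nf21[of f] h a3 a5 a6 a7 by (intro bexI[of _ 14]) (auto simp: repf_def)
        next
          assume a7: "f 7 = 6"
          then show ?thesis using vals a3 by simp
        next
          assume a7: "f 7 = 7"
          then show ?thesis using vals a6 by simp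
        qed
      qed
    next
      assume a5: "f 5 = 5"
      have "f 6 = 3 \<or> f 6 = 5 \<or> f 6 = 6 \<or> f 6 = 7" using vals by simp
      then show ?thesis
      proof (elim disjE)
        assume a6: "f 6 = 3"
        have "f 7 = 3 \<or> f 7 = 5 \<or> f 7 = 6 \<or> f 7 = 7" using vals by simp
        then show ?thesis
        proof (elim disjE)
          assume a7: "f 7 = 3"
          then show ?thesis using vals a6 by simp
        next
          assume a7: "f 7 = 5"
          then show ?thesis using vals a5 by simp
        next
          assume a7: "f 7 = 6"
          then show ?thesis using vals a3 by simp
        next
          assume a7: "f 7 = 7"
          show ?thesis using nf6[of f] h a3 a5 a6 a7 by (intro bexI[of _ 12]) (auto simp: repf_def)
        qed
      next
        assume a6: "f 6 = 5"
        then show ?thesis using vals a5 by simp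
      next
        assume a6: "f 6 = 6"
        then show ?thesis using vals a3 by simp
      next
        assume a6: "f 6 = 7"
        have "f 7 = 3 \<or> f 7 = 5 \<or> f 7 = 6 \<or> f 7 = 7" using vals by simp
        then show ?thesis
        proof (elim disjE)
          assume a7: "f 7 = 3"
          show ?thesis using nf14[of f] h a3 a5 a6 a7 by (intro bexI[of _ 13]) (auto simp: repf_def)
        next
          assume a7: "f 7 = 5"
          then show ?thesis using vals a5 by simp
        next
          assume a7: "f 7 = 6"
          then show ?thesis using vals a3 by simp
        next
          assume a7: "f 7 = 7"
          then show ?thesis using vals a6 by simp
        qed
      qed
    next
      assume a5: "f 5 = 6"
      then show ?thesis using vals a3 by simp
    next
      assume a5: "f 5 = 7"
      have "f 6 = 3 \<or> f 6 = 5 \<or> f 6 = 6 \<or> f 6 = 7" using vals by simp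
      then show ?thesis
      proof (elim disjE)
        assume a6: "f 6 = 3"
        have "f 7 = 3 \<or> f 7 = 5 \<or> f 7 = 6 \<or> f 7 = 7" using vals by simp
        then show ?thesis
        proof (elim disjE)
          assume a7: "f 7 = 3"
          then show ?thesis using vals a6 by simp
        next
          assume a7: "f 7 = 5"
          show ?thesis using nf15[of f] h a3 a5 a6 a7 by (intro bexI[of _ 13]) (auto simp: repf_def)
        next
          assume a7: "f 7 = 6"
          then show ?thesis using vals a3 by simp
        next
          assume a7: "f 7 = 7"
          then show ?thesis using vals a5 by simp
        qed
      next
        assume a6: "f 6 = 5"
        have "f 7 = 3 \<or> f 7 = 5 \<or> f 7 = 6 \<or> f 7 = 7" using vals by simp
        then show ?thesis
        proof (elim disjE)
          assume a7: "f 7 = 3"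
          show ?thesis using nf22[of f] h a3 a5 a6 a7 by (intro bexI[of _ 14]) (auto simp: repf_def)
        next
          assume a7: "f 7 = 5"
          then show ?thesis using vals a6 by simp
        next
          assume a7: "f 7 = 6"
          then show ?thesis using vals a3 by simp
        next
          assume a7: "f 7 = 7"
          then show ?thesis using vals a5 by simp
        qed
      next
        assume a6: "f 6 = 6"
        then show ?thesis using vals a3 by simp
      next
        assume a6: "f 6 = 7"
        then show ?thesis using vals a5 by simp
      qed
    qed
  next
    assume a3: "f 3 = 7"
    have "f 5 = 3 \<or> f 5 = 5 \<or> f 5 = 6 \<or> f 5 = 7" using vals by simp
    then show ?thesis
    proof (elim disjE)
      assume a5: "f 5 = 3"
      have "f 6 = 3 \<or> f 6 = 5 \<or> f 6 = 6 \<or> f 6 = 7" using vals by simp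
      then show ?thesis
      proof (elim disjE)
        assume a6: "f 6 = 3"
        then show ?thesis using vals a5 by simp
      next
        assume a6: "f 6 = 5"
        have "f 7 = 3 \<or> f 7 = 5 \<or> f 7 = 6 \<or> f 7 = 7" using vals by simp
        then show ?thesis
        proof (elim disjE)
          assume a7: "f 7 = 3"
          then show ?thesis using vals a5 by simp
        next
          assume a7: "f 7 = 5"
          then show ?thesis using vals a6 by simp
        next
          assume a7: "f 7 = 6"
          show ?thesis using nf23[of f] h a3 a5 a6 a7 by (intro bexI[of _ 14]) (auto simp: repf_def)
        next
          assume a7: "f 7 = 7"
          then show ?thesis using vals a3 by simp
        qed
      next
        assume a6: "f 6 = 6"
        have "f 7 = 3 \<or> f 7 = 5 \<or> f 7 = 6 \<or> f 7 = 7" using vals by simp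
        then show ?thesis
        proof (elim disjE)
          assume a7: "f 7 = 3"
          then show ?thesis using vals a5 by simp
        next
          assume a7: "f 7 = 5"
          show ?thesis using nf16[of f] h a3 a5 a6 a7 by (intro bexI[of _ 13]) (auto simp: repf_def)
        next
          assume a7: "f 7 = 6"
          then show ?thesis using vals a6 by simp
        next
          assume a7: "f 7 = 7"
          then show ?thesis using vals a3 by simp
        qed
      next
        assume a6: "f 6 = 7"
        then show ?thesis using vals a3 by simp
      qed
    next
      assume a5: "f 5 = 5"
      have "f 6 = 3 \<or> f 6 = 5 \<or> f 6 = 6 \<or> f 6 = 7" using vals by simp
      then show ?thesis
      proof (elim disjE)
        assume a6: "f 6 = 3"
        have "f 7 = 3 \<or> f 7 = 5 \<or> f 7 = 6 \<or> f 7 = 7" using vals by simp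
        then show ?thesis
        proof (elim disjE)
          assume a7: "f 7 = 3"
          then show ?thesis using vals a6 by simp
        next
          assume a7: "f 7 = 5"
          then show ?thesis using vals a5 by simp
        next
          assume a7: "f 7 = 6"
          show ?thesis using nf17[of f] h a3 a5 a6 a7 by (intro bexI[of _ 13]) (auto simp: repf_def)
        next
          assume a7: "f 7 = 7"
          then show ?thesis using vals a3 by simp
        qed
      next
        assume a6: "f 6 = 5"
        then show ?thesis using vals a5 by simp
      next
        assume a6: "f 6 = 6"
        have "f 7 = 3 \<or> f 7 = 5 \<or> f 7 = 6 \<or> f 7 = 7" using vals by simp
        then show ?thesis
        proof (elim disjE)
          assume a7: "f 7 = 3"
          show ?thesis using nf7[of f] h a3 a5 a6 a7 by (intro bexI[of _ 12]) (auto simp: repf_def)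
        next
          assume a7: "f 7 = 5"
          then show ?thesis using vals a5 by simp
        next
          assume a7: "f 7 = 6"
          then show ?thesis using vals a6 by simp
        next
          assume a7: "f 7 = 7"
          then show ?thesis using vals a3 by simp
        qed
      next
        assume a6: "f 6 = 7"
        then show ?thesis using vals a3 by simp
      qed
    next
      assume a5: "f 5 = 6"
      have "f 6 = 3 \<or> f 6 = 5 \<or> f 6 = 6 \<or> f 6 = 7" using vals by simp
      then show ?thesis
      proof (elim disjE)
        assume a6: "f 6 = 3"
        have "f 7 = 3 \<or> f 7 = 5 \<or> f 7 = 6 \<or> f 7 = 7" using vals by simp
        then show ?thesis
        proof (elim disjE)
          assume a7: "f 7 = 3"
          then show ?thesis using vals a6 by simp
        next
          assume a7: "f 7 = 5"
          show ?thesis using nf24[of f] h a3 a5 a6 a7 by (intro bexI[of _ 14]) (auto simp: repf_def)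
        next
          assume a7: "f 7 = 6"
          then show ?thesis using vals a5 by simp
        next
          assume a7: "f 7 = 7"
          then show ?thesis using vals a3 by simp
        qed
      next
        assume a6: "f 6 = 5"
        have "f 7 = 3 \<or> f 7 = 5 \<or> f 7 = 6 \<or> f 7 = 7" using vals by simp
        then show ?thesis
        proof (elim disjE)
          assume a7: "f 7 = 3"
          show ?thesis using nf18[of f] h a3 a5 a6 a7 by (intro bexI[of _ 13]) (auto simp: repf_def)
        next
          assume a7: "f 7 = 5"
          then show ?thesis using vals a6 by simp
        next
          assume a7: "f 7 = 6"
          then show ?thesis using vals a5 by simp
        next
          assume a7: "f 7 = 7"
          then show ?thesis using vals a3 by simp
        qed
      next
        assume a6: "f 6 = 6"
        then show ?thesis using vals a5 by simp
      next
        assume a6: "f 6 = 7"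
        then show ?thesis using vals a3 by simp
      qed
    next
      assume a5: "f 5 = 7"
      then show ?thesis using vals a3 by simp
    qed
  qed
qed

lemma rep_permutes: "r \<in> {11, 12, 13, 14} \<Longrightarrow> repf r permutes {..<8} \<and> repf r 0 = 0"
  by (auto simp: repf_def intro!: endo_permutes simp: inj_on_def rep11_def rep12_def rep13_def rep14_def split: if_splits)

lemma nf_exists: assumes p: "\<tau> permutes {..<8}" and z: "\<tau> 0 = 0"
  shows "\<exists>f. f permutes {..<8} \<and> f 0 = 0 \<and> f 1 = 1 \<and> f 2 = 2 \<and> f 4 = 4 \<and>
     codes_isomorphic 16 (PW (graph f)) (PW (graph \<tau>))"
proof -
  have inj: "\<tau> x = \<tau> y \<longleftrightarrow> x = y" for x y using p by (meson permutes_inj inj_eq)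
  have lt: "x < 8 \<Longrightarrow> \<tau> x < 8" for x using permutes_in_image[OF p] by simp
  obtain r where r: "r \<in> {4, 5, 6, 7}" "\<tau> r \<noteq> xor (\<tau> 1) (\<tau> 2)"
  proof (cases "\<tau> 4 = xor (\<tau> 1) (\<tau> 2)")
    case True
    then have "\<tau> 5 \<noteq> xor (\<tau> 1) (\<tau> 2)" using inj[of 4 5] by auto
    then show ?thesis using that[of 5] by auto
  next
    case False then show ?thesis using that[of 4] by auto
  qed
  define A where "A = lin 1 2 r"
  define M where "M = lin (\<tau> 1) (\<tau> 2) (\<tau> r)"
  have LA: "linperm A" unfolding A_def using r by (intro lin_perm) auto
  have r8: "r < 8" "r \<noteq> 0" "r \<noteq> 1" "r \<noteq> 2" using r by auto
  have LM: "linperm M" unfolding M_def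
  proof (rule lin_perm)
    show "\<tau> 1 < 8" "\<tau> 2 < 8" "\<tau> r < 8" using lt r8 by auto
    show "\<tau> 1 \<noteq> 0" "\<tau> 2 \<noteq> 0" "\<tau> r \<noteq> 0" using inj[of _ 0] z r8 by auto
    show "\<tau> 1 \<noteq> \<tau> 2" "\<tau> 1 \<noteq> \<tau> r" "\<tau> 2 \<noteq> \<tau> r" using inj r8 by auto
    show "xor (\<tau> 1) (\<tau> 2) \<noteq> \<tau> r" using r by auto
  qed
  have pA: "A permutes {..<8}" and pM: "M permutes {..<8}" using LA LM by (auto simp: linperm_def)
  define f where "f = inv M \<circ> \<tau> \<circ> A"
  have pf: "f permutes {..<8}" unfolding f_def
    by (intro permutes_compose pA p permutes_inv pM)
  have Mi: "M (inv M x) = x" "inv M (M x) = x" for x using permutes_inverses[OF pM] by auto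
  have A0: "A 0 = 0" "A 1 = 1" "A 2 = 2" "A 4 = r" by (simp_all add: A_def lin_def)
  have M0: "M 0 = 0" "M 1 = \<tau> 1" "M 2 = \<tau> 2" "M 4 = \<tau> r" by (simp_all add: M_def lin_def)
  have "f 0 = inv M (M 0)" "f 1 = inv M (M 1)" "f 2 = inv M (M 2)" "f 4 = inv M (M 4)"
    using A0 M0 z by (simp_all add: f_def)
  then have "f 0 = 0" "f 1 = 1" "f 2 = 2" "f 4 = 4" using Mi(2) by simp_all
  moreover have "codes_isomorphic 16 (PW (graph f)) (PW (graph \<tau>))"
  proof (rule gl_iso[OF LA LM])
    show "\<tau> (A y) = M (f y)" for y by (simp add: f_def Mi)
    show "y < 8 \<Longrightarrow> f y < 8" for y using permutes_in_image[OF pf] by simp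
  qed
  ultimately show ?thesis using pf by blast
qed

lemma main_class: assumes p: "\<tau> permutes {..<8}" and z: "\<tau> 0 = 0"
  shows "\<exists>r\<in>{11, 12, 13, 14::nat}. codes_isomorphic 16 (S_tau \<tau>) (S_tau (repf r))"
proof -
  obtain f where f: "f permutes {..<8}" "f 0 = 0" "f 1 = 1" "f 2 = 2" "f 4 = 4"
    "codes_isomorphic 16 (PW (graph f)) (PW (graph \<tau>))" using nf_exists[OF p z] by blast
  obtain r where r: "r \<in> {11, 12, 13, 14::nat}" "codes_isomorphic 16 (PW (graph f)) (PW (graph (repf r)))"
    using nf_class[OF f(1-5)] by blast
  have "codes_isomorphic 16 (PW (graph \<tau>)) (PW (graph (repf r)))"
    using iso_trans[OF iso_sym[OF f(6)] r(2)] .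
  moreover have "S_tau \<tau> = PW (graph \<tau>)" by (rule S_tau_PW[OF p z])
  moreover have "S_tau (repf r) = PW (graph (repf r))" using rep_permutes[OF r(1)] S_tau_PW by blast
  ultimately show ?thesis using r(1) by auto
qed

section \<open>Ranks\<close>

definition Qs :: "(nat \<Rightarrow> nat) \<Rightarrow> (nat \<times> nat) set" where
  "Qs f = {v. fst v < 8 \<and> snd v < 8 \<and> fib v \<subseteq> gf2_span (PW (graph f))}"

lemma Qs_graph: "y < 8 \<Longrightarrow> f y < 8 \<Longrightarrow> (y, f y) \<in> Qs f"
  using span_superset[of "PW (graph f)"] by (auto simp: Qs_def PW_def graph_def)

lemma Qs_xor: assumes "(a, b) \<in> Qs f" "(c, d) \<in> Qs f" shows "(xor a c, xor b d) \<in> Qs f"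
proof -
  have r: "a < 8" "b < 8" "c < 8" "d < 8" "fib (a, b) \<subseteq> gf2_span (PW (graph f))"
    "fib (c, d) \<subseteq> gf2_span (PW (graph f))" using assms by (auto simp: Qs_def)
  have "fib (xor a c, xor b d) \<subseteq> gf2_span (PW (graph f))"
  proof
    fix w assume w: "w \<in> fib (xor a c, xor b d)"
    have c2: "cw2 (a, b) \<in> fib (a, b)" using cw2_fib r by auto
    have "w \<oplus> cw2 (a, b) \<in> fib (xor (xor a c) a, xor (xor b d) b)" by (rule fib_wadd[OF w c2])
    then have "w \<oplus> cw2 (a, b) \<in> fib (c, d)" by (simp add: xor_ac)
    then have "(w \<oplus> cw2 (a, b)) \<oplus> cw2 (a, b) \<in> gf2_span (PW (graph f))"
      using r c2 span_subspace[of "PW (graph f)"] unfolding subspace_def by blast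
    then show "w \<in> gf2_span (PW (graph f))" by simp
  qed
  then show ?thesis using r by (simp add: Qs_def xor_lt8)
qed

lemma Qs_diag: assumes "f 0 = 0" "f 1 = 1" "f 2 = 2" "f 4 = 4" and a: "a < 8"
  shows "(a, a) \<in> Qs f"
proof -
  have q: "(0, 0) \<in> Qs f" "(1, 1) \<in> Qs f" "(2, 2) \<in> Qs f" "(4, 4) \<in> Qs f"
    using Qs_graph[of 0 f] Qs_graph[of 1 f] Qs_graph[of 2 f] Qs_graph[of 4 f] assms by auto
  have q3: "(3, 3) \<in> Qs f" using Qs_xor[OF q(2) q(3)] by simp
  have q5: "(5, 5) \<in> Qs f" using Qs_xor[OF q(2) q(4)] by simp
  have q6: "(6, 6) \<in> Qs f" using Qs_xor[OF q(3) q(4)] by simp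
  have q7: "(7, 7) \<in> Qs f" using Qs_xor[OF q3 q(4)] by simp
  show ?thesis using a q q3 q5 q6 q7 unfolding lt8_cases by auto
qed

lemma Qs_0z: assumes "f 0 = 0" "f 1 = 1" "f 2 = 2" "f 4 = 4" and y: "y < 8" "f y < 8"
  shows "(0, xor y (f y)) \<in> Qs f"
  using Qs_xor[OF Qs_graph[of y f, OF y] Qs_diag[OF assms(1-4) y(1)]] by (simp add: xor.commute)

lemma Qs_0z': assumes "f 0 = 0" "f 1 = 1" "f 2 = 2" "f 4 = 4" "y < 8" "f y < 8" "xor y (f y) = z"
  shows "(0, z) \<in> Qs f"
  using Qs_0z[OF assms(1-6)] assms(7) by simp

lemma Qs_xor': "(a, b) \<in> Qs f \<Longrightarrow> (c, d) \<in> Qs f \<Longrightarrow> xor a c = e \<Longrightarrow> xor b d = g \<Longrightarrow> (e, g) \<in> Qs f"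
  using Qs_xor by blast

definition VZ :: "nat set \<Rightarrow> (nat \<times> nat) set" where
  "VZ Z = {(a, b). a < 8 \<and> b < 8 \<and> xor a b \<in> Z}"

lemma card_VZ: assumes "Z \<subseteq> {..<8}" shows "card (VZ Z) = 8 * card Z"
proof -
  have e: "VZ Z = (\<lambda>(a, z). (a, xor a z)) ` ({..<8} \<times> Z)"
  proof
    show "VZ Z \<subseteq> (\<lambda>(a, z). (a, xor a z)) ` ({..<8} \<times> Z)"
    proof
      fix v assume "v \<in> VZ Z"
      then obtain a b where "v = (a, b)" "a < 8" "b < 8" "xor a b \<in> Z" by (auto simp: VZ_def)
      then show "v \<in> (\<lambda>(a, z). (a, xor a z)) ` ({..<8} \<times> Z)"
        by (intro image_eqI[of _ _ "(a, xor a b)"]) (auto simp: xor_left_self_nat)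
    qed
    show "(\<lambda>(a, z). (a, xor a z)) ` ({..<8} \<times> Z) \<subseteq> VZ Z"
      using assms by (auto simp: VZ_def xor_left_self_nat xor_lt8)
  qed
  have "inj_on (\<lambda>(a, z). (a, xor a z)) ({..<8} \<times> Z)"
    by (auto simp: inj_on_def) (metis xor_left_self_nat)
  then have "card (VZ Z) = card ({..<8::nat} \<times> Z)" by (simp add: e card_image)
  also have "\<dots> = 8 * card Z" using assms finite_subset by (simp add: card_cartesian_product)
  finally show ?thesis .
qed

lemma rank_PW: assumes f: "f 0 = 0" "f 1 = 1" "f 2 = 2" "f 4 = 4" "\<And>y. y < 8 \<Longrightarrow> f y < 8"
  and Z: "Z \<subseteq> {..<8}" "0 \<in> Z" "\<And>x y. x \<in> Z \<Longrightarrow> y \<in> Z \<Longrightarrow> xor x y \<in> Z"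
  "\<And>y. y < 8 \<Longrightarrow> xor y (f y) \<in> Z" and gen: "\<And>z. z \<in> Z \<Longrightarrow> (0, z) \<in> Qs f"
  and cZ: "card Z = 2 ^ k"
  shows "code_rank (PW (graph f)) = 11 + k"
proof -
  let ?V = "PW (VZ Z)"
  have sub: "subspace ?V"
    unfolding subspace_def
  proof (intro conjI ballI)
    show "zero_word \<in> ?V" using zero_fib Z(2) unfolding PW_def by (intro UN_I[of "(0, 0)"]) (auto simp: VZ_def)
    fix x y assume "x \<in> ?V" "y \<in> ?V"
    then obtain a b c d where "x \<in> fib (a, b)" "(a, b) \<in> VZ Z" "y \<in> fib (c, d)" "(c, d) \<in> VZ Z"
      by (auto simp: PW_def)
    moreover have "xor (xor a c) (xor b d) = xor (xor a b) (xor c d)" by (simp add: xor_ac)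
    ultimately have "x \<oplus> y \<in> fib (xor a c, xor b d)" "(xor a c, xor b d) \<in> VZ Z"
      using Z(3) fib_wadd by (auto simp: VZ_def xor_lt8)
    then show "x \<oplus> y \<in> ?V" unfolding PW_def by blast
  qed
  have "graph f \<subseteq> VZ Z" using f(5) Z(4) by (auto simp: graph_def VZ_def)
  then have "PW (graph f) \<subseteq> ?V" by (auto simp: PW_def)
  then have s1: "gf2_span (PW (graph f)) \<subseteq> ?V" by (rule span_sub[OF sub])
  have "VZ Z \<subseteq> Qs f"
  proof
    fix v assume "v \<in> VZ Z"
    then obtain a b where v: "v = (a, b)" "a < 8" "b < 8" "xor a b \<in> Z" by (auto simp: VZ_def)
    have "(xor a 0, xor a (xor a b)) \<in> Qs f" by (rule Qs_xor[OF Qs_diag[OF f(1-4) v(2)] gen[OF v(4)]])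
    then show "v \<in> Qs f" using v by (simp add: xor_left_self_nat)
  qed
  then have "?V \<subseteq> gf2_span (PW (graph f))" by (auto simp: PW_def Qs_def)
  with s1 have eq: "gf2_span (PW (graph f)) = ?V" by auto
  have sV: "VZ Z \<subseteq> {..<8} \<times> {..<8}" by (auto simp: VZ_def)
  then have fV: "finite (VZ Z)" by (rule finite_subset) simp
  have "card ?V = 2 ^ (11 + k)"
    using card_PW[OF fV sV] card_VZ[OF Z(1)] cZ by (simp add: power_add)
  then show ?thesis unfolding code_rank_def eq by (rule dim_eq[OF sub finite_PW])
qed

lemma rank11: "code_rank (PW (graph rep11)) = 11"
  using rank_PW[of rep11 "{0}" 0] Qs_graph[of 0 rep11] by (simp add: rep11_def)

lemma rank12: "code_rank (PW (graph rep12)) = 12"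
proof -
  have "code_rank (PW (graph rep12)) = 11 + 1"
  proof (rule rank_PW[of rep12 "{0, 1}"])
    fix z assume "z \<in> {0, 1::nat}"
    moreover have "(0, 0) \<in> Qs rep12" using Qs_graph[of 0 rep12] by (simp add: rep12_def)
    moreover have "(0, 1) \<in> Qs rep12" by (rule Qs_0z'[of _ 6]) (simp_all add: rep12_def)
    ultimately show "(0, z) \<in> Qs rep12" by auto
  qed (auto simp: rep12_def lt8_cases)
  then show ?thesis by simp
qed

lemma rank13: "code_rank (PW (graph rep13)) = 13"
proof -
  have "code_rank (PW (graph rep13)) = 11 + 2"
  proof (rule rank_PW[of rep13 "{0, 1, 2, 3}"])
    fix z assume "z \<in> {0, 1, 2, 3::nat}"
    moreover have "(0, 0) \<in> Qs rep13" using Qs_graph[of 0 rep13] by (simp add: rep13_def)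
    moreover have "(0, 3) \<in> Qs rep13" by (rule Qs_0z'[of _ 5]) (simp_all add: rep13_def)
    moreover have "(0, 1) \<in> Qs rep13" by (rule Qs_0z'[of _ 6]) (simp_all add: rep13_def)
    moreover have "(0, 2) \<in> Qs rep13" by (rule Qs_0z'[of _ 7]) (simp_all add: rep13_def)
    ultimately show "(0, z) \<in> Qs rep13" by auto
  qed (auto simp: rep13_def lt8_cases)
  then show ?thesis by simp
qed

lemma rank14: "code_rank (PW (graph rep14)) = 14"
proof -
  have "code_rank (PW (graph rep14)) = 11 + 3"
  proof (rule rank_PW[of rep14 "{..<8}"])
    fix z :: nat assume z: "z \<in> {..<8}"
    have q0: "(0, 0) \<in> Qs rep14" using Qs_graph[of 0 rep14] by (simp add: rep14_def)
    have q6: "(0, 6) \<in> Qs rep14" by (rule Qs_0z'[of _ 3]) (simp_all add: rep14_def)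
    have q3: "(0, 3) \<in> Qs rep14" by (rule Qs_0z'[of _ 5]) (simp_all add: rep14_def)
    have q1: "(0, 1) \<in> Qs rep14" by (rule Qs_0z'[of _ 6]) (simp_all add: rep14_def)
    have q4: "(0, 4) \<in> Qs rep14" by (rule Qs_0z'[of _ 7]) (simp_all add: rep14_def)
    have q2: "(0, 2) \<in> Qs rep14" by (rule Qs_xor'[OF q3 q1]) simp_all
    have q5: "(0, 5) \<in> Qs rep14" by (rule Qs_xor'[OF q1 q4]) simp_all
    have q7: "(0, 7) \<in> Qs rep14" by (rule Qs_xor'[OF q3 q4]) simp_all
    show "(0, z) \<in> Qs rep14" using z q0 q1 q2 q3 q4 q5 q6 q7 unfolding lessThan_iff lt8_cases by auto
  qed (auto simp: rep14_def lt8_cases xor_lt8)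
  then show ?thesis by simp
qed

section \<open>Kernel and automorphisms\<close>

lemma graph_mem: "(p, q) \<in> graph f \<longleftrightarrow> p < 8 \<and> q = f p" by (auto simp: graph_def)

lemma PW_graph_mem: "w \<in> PW (graph f) \<longleftrightarrow> (\<exists>y<8. w \<in> fib (y, f y))"
  by (auto simp: PW_def graph_def)

lemma fib00_shift: assumes f0: "f 0 = 0" and k: "k \<in> fib (0, 0)"
  shows "code_shift (PW (graph f)) k = PW (graph f)"
proof -
  have s: "c \<oplus> k \<in> PW (graph f)" if cP: "c \<in> PW (graph f)" for c
  proof -
    obtain y where y: "y < 8" "c \<in> fib (y, f y)" using cP unfolding PW_graph_mem by blast
    have "c \<oplus> k \<in> fib (xor y 0, xor (f y) 0)" by (rule fib_wadd[OF y(2) k])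
    then show ?thesis using y by (auto simp: PW_graph_mem)
  qed
  show ?thesis unfolding code_shift_def
  proof
    show "(\<lambda>c. c \<oplus> k) ` PW (graph f) \<subseteq> PW (graph f)" using s by auto
    show "PW (graph f) \<subseteq> (\<lambda>c. c \<oplus> k) ` PW (graph f)"
    proof
      fix c assume "c \<in> PW (graph f)"
      then have "c \<oplus> k \<in> PW (graph f)" "c = (c \<oplus> k) \<oplus> k" using s by auto
      then show "c \<in> (\<lambda>c. c \<oplus> k) ` PW (graph f)" by blast
    qed
  qed
qed

lemma zero_PW: "f 0 = 0 \<Longrightarrow> zero_word \<in> PW (graph f)"
  using zero_fib by (auto simp: PW_graph_mem intro!: exI[of _ 0])

lemma kernel_fib: assumes f0: "f 0 = 0" and f8: "\<And>y. y < 8 \<Longrightarrow> f y < 8"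
  and nl: "\<And>y0. 0 < y0 \<Longrightarrow> y0 < 8 \<Longrightarrow> \<exists>y'<8. f (xor y' y0) \<noteq> xor (f y') (f y0)"
  shows "code_kernel 16 (PW (graph f)) = fib (0, 0)"
proof
  show "fib (0, 0) \<subseteq> code_kernel 16 (PW (graph f))"
    using fib00_shift[of f, OF f0] fib_Fn by (auto simp: code_kernel_def)
  show "code_kernel 16 (PW (graph f)) \<subseteq> fib (0, 0)"
  proof
    fix k assume k: "k \<in> code_kernel 16 (PW (graph f))"
    then have sh: "code_shift (PW (graph f)) k = PW (graph f)" by (simp add: code_kernel_def)
    have "zero_word \<oplus> k \<in> PW (graph f)" using sh zero_PW[of f, OF f0] unfolding code_shift_def by blast
    then obtain y0 where y0: "y0 < 8" "k \<in> fib (y0, f y0)" by (auto simp: PW_graph_mem)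
    show "k \<in> fib (0, 0)"
    proof (cases "y0 = 0")
      case True then show ?thesis using y0 f0 by simp
    next
      case False
      then obtain y' where y': "y' < 8" "f (xor y' y0) \<noteq> xor (f y') (f y0)" using nl y0 by auto
      have c: "cw2 (y', f y') \<in> fib (y', f y')" using cw2_fib y' f8 by auto
      then have "cw2 (y', f y') \<in> PW (graph f)" using y' by (auto simp: PW_graph_mem)
      then have "cw2 (y', f y') \<oplus> k \<in> PW (graph f)" using sh unfolding code_shift_def by blast
      then obtain z where z: "z < 8" "cw2 (y', f y') \<oplus> k \<in> fib (z, f z)" by (auto simp: PW_graph_mem)
      have "cw2 (y', f y') \<oplus> k \<in> fib (xor y' y0, xor (f y') (f y0))" by (rule fib_wadd[OF c y0(2)])
      then have "(z, f z) = (xor y' y0, xor (f y') (f y0))" using fib_disj z(2) by blast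
      then show ?thesis using y'(2) by auto
    qed
  qed
qed

definition reach :: "word set \<Rightarrow> word \<Rightarrow> word \<Rightarrow> bool" where
  "reach C u v \<longleftrightarrow> (\<exists>x \<pi>. (x, \<pi>) \<in> Aut 16 C \<and> isometry_map x \<pi> u = v)"

lemma reach_trans: assumes "reach C u v" "reach C v w" shows "reach C u w"
proof -
  obtain x \<pi> y \<rho> where h: "(x, \<pi>) \<in> Aut 16 C" "isometry_map x \<pi> u = v"
    "(y, \<rho>) \<in> Aut 16 C" "isometry_map y \<rho> v = w" using assms by (auto simp: reach_def)
  have b: "bij \<pi>" "bij \<rho>" using h permutes_bij by (auto simp: Aut_mem)
  show ?thesis unfolding reach_def
    using Aut_comp[OF h(3) h(1)] h(2,4) iso_map_comp[OF b(2,1)] by metis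
qed

lemma reach_sym: assumes "reach C u v" shows "reach C v u"
proof -
  obtain x \<pi> where h: "(x, \<pi>) \<in> Aut 16 C" "isometry_map x \<pi> u = v" using assms by (auto simp: reach_def)
  have b: "bij \<pi>" using h permutes_bij by (auto simp: Aut_mem)
  show ?thesis unfolding reach_def using Aut_inv[OF h(1)] h(2) iso_map_inv[OF b] by metis
qed

lemma trans_reach: "(\<And>u v. u \<in> X \<Longrightarrow> v \<in> X \<Longrightarrow> reach C u v) \<Longrightarrow> transitive_on 16 C X"
  by (fastforce simp: transitive_on_def reach_def)

lemma iso_map_wadd2: "isometry_map x \<pi> (a \<oplus> b) = isometry_map x \<pi> a \<oplus> perm_word \<pi> b"
  by (simp add: isometry_map_def perm_word_wadd wadd_assoc)

lemma nbr_form: assumes "u \<in> neighbors n C" "C \<subseteq> Fn n"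
  shows "\<exists>c\<in>C. \<exists>i<n. u = c \<oplus> unit_vec i"
proof -
  obtain c where c: "c \<in> C" "u \<in> Fn n" "hdist n u c = 1" using assms(1) by (auto simp: neighbors_def)
  have F: "u \<oplus> c \<in> Fn n" using c assms(2) Fn_wadd by blast
  have "card (supp n (u \<oplus> c)) = 1" using c(3) by (simp add: hdist_def wt_supp)
  then obtain i where i: "supp n (u \<oplus> c) = {i}" by (auto simp: card_Suc_eq)
  then have "i < n" by (auto simp: supp_def)
  moreover have "u \<oplus> c = unit_vec i" using Fn_eq_supp[OF F] i by (simp add: unit_vec_def)
  then have "u = c \<oplus> unit_vec i" by (metis wadd_lself wadd_comm)
  ultimately show ?thesis using c by blast
qed

definition I3 :: "nat \<Rightarrow> nat" where "I3 = lin 1 2 4"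

lemma I3_id: "y < 8 \<Longrightarrow> I3 y = y" unfolding lt8_cases by (auto simp: I3_def lin_def)
lemma I3_lin: "linperm I3" unfolding I3_def by (rule lin_perm) auto

lemma aut_gen: assumes A: "linperm A" and B: "linperm B" and t: "t1 < 8" "t2 < 8"
  and x: "xl \<in> fib8 a" "xr \<in> fib8 b" and f8: "\<And>y. y < 8 \<Longrightarrow> f y < 8"
  and eq: "\<And>y. y < 8 \<Longrightarrow> f (xor (A y) a) = xor (B (f y)) b"
  shows "(wconcat 8 xl xr, pi2 (aff A t1) (aff B t2)) \<in> Aut 16 (PW (graph f))"
proof -
  have a8: "a < 8" using x fib8_syn syn_lt8 by metis
  have "(\<lambda>(p, q). (xor (A p) a, xor (B q) b)) ` graph f = (\<lambda>z. (z, f z)) ` (aff A a ` {..<8})"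
    using eq by (auto simp: graph_def image_image aff_def)
  also have "aff A a ` {..<8} = {..<8}" by (rule permutes_image[OF aff_permutes[OF A a8]])
  finally have "isometry_map (wconcat 8 xl xr) (pi2 (aff A t1) (aff B t2)) ` PW (graph f) = PW (graph f)"
    using blk_PW[OF A B t x graph_sub[OF f8]] by (simp add: graph_def)
  then show ?thesis using blk_ok[OF A B t x] by (simp add: Aut_mem)
qed

lemma aut_swap: assumes A: "linperm A" and B: "linperm B" and t: "t1 < 8"
  and f8: "\<And>y. y < 8 \<Longrightarrow> f y < 8" and pf: "f permutes {..<8}"
  and eq: "\<And>y. y < 8 \<Longrightarrow> f (A (f y)) = B y"
  shows "(zero_word, pi2 (aff A t1) (aff B 0) \<circ> sw) \<in> Aut 16 (PW (graph f))"
proof -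
  have t0: "(0::nat) < 8" by simp
  let ?\<pi> = "pi2 (aff A t1) (aff B 0)"
  have p\<pi>: "?\<pi> permutes {..<16}" using blk_ok[OF A B t t0 fib8_zero fib8_zero] by simp
  have b: "bij ?\<pi>" "bij sw" using p\<pi> sw_permutes permutes_bij by auto
  have sg: "(\<lambda>(p, q). (q, p)) ` graph f \<subseteq> {..<8} \<times> {..<8}" using f8 by (auto simp: graph_def)
  have "isometry_map zero_word sw ` PW (graph f) = PW ((\<lambda>(p, q). (q, p)) ` graph f)" by (rule sw_PW)
  moreover have "isometry_map (wconcat 8 zero_word zero_word) ?\<pi> ` PW ((\<lambda>(p, q). (q, p)) ` graph f)
      = PW ((\<lambda>(p, q). (xor (A p) 0, xor (B q) 0)) ` ((\<lambda>(p, q). (q, p)) ` graph f))"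
    by (rule blk_PW[OF A B t t0 fib8_zero fib8_zero sg])
  moreover have "(\<lambda>(p, q). (xor (A p) 0, xor (B q) 0)) ` ((\<lambda>(p, q). (q, p)) ` graph f)
      = (\<lambda>z. (z, f z)) ` ((A \<circ> f) ` {..<8})"
    using eq by (auto simp: graph_def image_image)
  moreover have "(A \<circ> f) ` {..<8} = {..<8}"
  proof -
    have "(A \<circ> f) ` {..<8} = A ` (f ` {..<8})" by (rule image_comp[symmetric])
    then show ?thesis using permutes_image[OF pf] permutes_image[OF conjunct1[OF A[unfolded linperm_def]]] by simp
  qed
  ultimately have "isometry_map (wconcat 8 zero_word zero_word) ?\<pi> ` (isometry_map zero_word sw ` PW (graph f)) = PW (graph f)"
    by (simp add: graph_def)
  moreover have "isometry_map (wconcat 8 zero_word zero_word) ?\<pi> (isometry_map zero_word sw w) =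
      isometry_map zero_word (?\<pi> \<circ> sw) w" for w
    by (simp add: iso_map_comp[OF b] wconcat_zero)
  ultimately have "isometry_map zero_word (?\<pi> \<circ> sw) ` PW (graph f) = PW (graph f)" by (simp add: image_image)
  then show ?thesis using p\<pi> sw_permutes by (simp add: Aut_mem permutes_compose)
qed

lemma NT_crit: assumes f0: "f 0 = 0" and pf: "f permutes {..<8}"
  and blk: "\<And>y0. y0 < 8 \<Longrightarrow> \<exists>A B a b. linperm A \<and> linperm B \<and> a < 8 \<and> b < 8 \<and> xor (A y0) a = 0 \<and>
      (\<forall>y<8. f (xor (A y) a) = xor (B (f y)) b)"
  and swp: "\<exists>A B. linperm A \<and> linperm B \<and> (\<forall>y<8. f (A (f y)) = B y)"
  shows "neighbor_transitive 16 (PW (graph f))"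
proof -
  let ?C = "PW (graph f)"
  have f8: "y < 8 \<Longrightarrow> f y < 8" for y using permutes_in_image[OF pf] by simp
  have to0: "reach ?C u w" if u: "u \<in> fib (y0, f y0)" "y0 < 8" and w: "w \<in> fib (0, 0)" for u w y0
  proof -
    obtain A B a b where h: "linperm A" "linperm B" "a < 8" "b < 8" "xor (A y0) a = 0"
      "\<forall>y<8. f (xor (A y) a) = xor (B (f y)) b" using blk[OF u(2)] by blast
    have t0: "(0::nat) < 8" by simp
    have au: "(wconcat 8 (cw a) (cw b), pi2 (aff A 0) (aff B 0)) \<in> Aut 16 ?C"
      by (rule aut_gen[OF h(1,2) t0 t0 cw_fib8[OF h(3)] cw_fib8[OF h(4)] f8]) (use h(6) in auto)
    have "isometry_map (wconcat 8 (cw a) (cw b)) (pi2 (aff A 0) (aff B 0)) u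
        \<in> fib (xor (A y0) a, xor (B (f y0)) b)"
      using blk_fib[OF h(1,2) t0 t0 cw_fib8[OF h(3)] cw_fib8[OF h(4)] u(2) f8[OF u(2)]] u(1) by blast
    moreover have "xor (B (f y0)) b = 0" using h(5,6) u(2) f0 by (metis xor.left_neutral)
    ultimately have u': "isometry_map (wconcat 8 (cw a) (cw b)) (pi2 (aff A 0) (aff B 0)) u \<in> fib (0, 0)"
      using h(5) by simp
    then have r1: "reach ?C u (isometry_map (wconcat 8 (cw a) (cw b)) (pi2 (aff A 0) (aff B 0)) u)"
      using au by (auto simp: reach_def)
    let ?u = "isometry_map (wconcat 8 (cw a) (cw b)) (pi2 (aff A 0) (aff B 0)) u"
    let ?k = "?u \<oplus> w"
    have k: "?k \<in> fib (0, 0)" using fib_wadd[OF u' w] by simp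
    have pid: "perm_word id y = y" for y by (simp add: perm_word_def)
    have "(?k, id) \<in> Aut 16 ?C"
      using fib00_shift[of f, OF f0 k] fib_Fn[OF k]
      by (simp add: Aut_mem isometry_map_def pid code_shift_def wadd_comm)
    moreover have "isometry_map ?k id ?u = w"
    proof -
      have e: "(a \<oplus> b) \<oplus> a = b" for a b :: word by (auto simp: wadd_def fun_eq_iff)
      have "isometry_map ?k id ?u = ?k \<oplus> ?u" by (simp only: isometry_map_def[of ?k] pid)
      then show ?thesis using e by simp
    qed
    ultimately have "reach ?C ?u w" by (auto simp: reach_def)
    then show ?thesis using reach_trans[OF r1] by blast
  qed
  have cw: "reach ?C u v" if uvC: "u \<in> ?C" "v \<in> ?C" for u v
  proof -
    obtain y1 y2 where "y1 < 8" "u \<in> fib (y1, f y1)" "y2 < 8" "v \<in> fib (y2, f y2)"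
      using uvC unfolding PW_graph_mem by blast
    then show ?thesis using to0[of u y1 zero_word] to0[of v y2 zero_word] zero_fib reach_sym reach_trans by blast
  qed
  have pos: "reach ?C (unit_vec j) (unit_vec 0)" if j: "j < 16" for j
  proof -
    obtain \<pi> where p: "(zero_word, \<pi>) \<in> Aut 16 ?C" "\<pi> j = 0"
    proof (cases "j < 8")
      case True
      have t0: "(0::nat) < 8" by simp
      have "(wconcat 8 zero_word zero_word, pi2 (aff I3 j) (aff I3 0)) \<in> Aut 16 ?C"
        by (rule aut_gen[OF I3_lin I3_lin True t0 fib8_zero fib8_zero f8]) (simp_all add: I3_id f8)
      moreover have "pi2 (aff I3 j) (aff I3 0) j = 0" using True by (simp add: pi2_def aff_def I3_id)
      ultimately show ?thesis using that by (simp add: wconcat_zero)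
    next
      case False
      obtain A B where h: "linperm A" "linperm B" "\<forall>y<8. f (A (f y)) = B y" using swp by blast
      have j8: "j - 8 < 8" using j False by simp
      have t: "A (j - 8) < 8" using linperm_lt[OF h(1) j8] .
      have "(zero_word, pi2 (aff A (A (j - 8))) (aff B 0) \<circ> sw) \<in> Aut 16 ?C"
        by (rule aut_swap[OF h(1,2) t f8 pf]) (use h(3) in auto)
      moreover have "(pi2 (aff A (A (j - 8))) (aff B 0) \<circ> sw) j = 0"
        using False j j8 by (simp add: pi2_def aff_def sw_def)
      ultimately show ?thesis using that by blast
    qed
    have "bij \<pi>" using p permutes_bij by (auto simp: Aut_mem)
    then have "isometry_map zero_word \<pi> (unit_vec j) = unit_vec 0"
      using p(2) by (simp add: isometry_map_def perm_word_unit)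
    then show ?thesis using p(1) by (auto simp: reach_def)
  qed
  have CF: "?C \<subseteq> Fn 16" by (rule PW_Fn)
  have nb: "reach ?C u (unit_vec 0)" if uN: "u \<in> neighbors 16 ?C" for u
  proof -
    obtain c i where ci: "c \<in> ?C" "i < 16" "u = c \<oplus> unit_vec i" using nbr_form[OF uN CF] by blast
    obtain x \<pi> where g: "(x, \<pi>) \<in> Aut 16 ?C" "isometry_map x \<pi> c = zero_word"
      using cw[OF ci(1) zero_PW[of f, OF f0]] by (auto simp: reach_def)
    have p: "\<pi> permutes {..<16}" using g by (simp add: Aut_mem)
    have "isometry_map x \<pi> u = unit_vec (\<pi> i)"
      using g(2) ci(3) p by (simp add: iso_map_wadd2 perm_word_unit permutes_bij)
    then have "reach ?C u (unit_vec (\<pi> i))" using g(1) by (auto simp: reach_def)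
    moreover have "\<pi> i < 16" using permutes_in_image[OF p] ci(2) by simp
    ultimately show ?thesis using pos reach_trans by blast
  qed
  have "transitive_on 16 ?C ?C" by (rule trans_reach) (rule cw)
  moreover have "transitive_on 16 ?C (neighbors 16 ?C)"
  proof (rule trans_reach)
    fix u v assume "u \<in> neighbors 16 ?C" "v \<in> neighbors 16 ?C"
    then have "reach ?C u (unit_vec 0)" "reach ?C (unit_vec 0) v" using nb reach_sym by auto
    then show "reach ?C u v" by (rule reach_trans)
  qed
  ultimately show ?thesis unfolding neighbor_transitive_def by simp
qed

lemma all8: "P 0 \<Longrightarrow> P 1 \<Longrightarrow> P 2 \<Longrightarrow> P 3 \<Longrightarrow> P 4 \<Longrightarrow> P 5 \<Longrightarrow> P 6 \<Longrightarrow> P (7::nat) \<Longrightarrow> \<forall>y<8. P y"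
  by (auto simp: lt8_cases)

lemma sucn: "Suc (Suc (Suc 0)) = 3" "Suc (Suc (Suc (Suc 0))) = 4" "Suc (Suc (Suc (Suc (Suc 0)))) = 5" "Suc (Suc (Suc (Suc (Suc (Suc 0))))) = 6" "Suc (Suc (Suc (Suc (Suc (Suc (Suc 0)))))) = 7"
  by simp_all

lemma lp_1_2_4: "linperm (lin 1 2 4)" by (rule lin_perm) simp_all
lemma lp_1_2_5: "linperm (lin 1 2 5)" by (rule lin_perm) simp_all
lemma lp_1_2_6: "linperm (lin 1 2 6)" by (rule lin_perm) simp_all
lemma lp_1_2_7: "linperm (lin 1 2 7)" by (rule lin_perm) simp_all
lemma lp_1_3_4: "linperm (lin 1 3 4)" by (rule lin_perm) simp_all
lemma lp_1_3_5: "linperm (lin 1 3 5)" by (rule lin_perm) simp_all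
lemma lp_1_3_6: "linperm (lin 1 3 6)" by (rule lin_perm) simp_all
lemma lp_1_3_7: "linperm (lin 1 3 7)" by (rule lin_perm) simp_all
lemma lp_1_4_2: "linperm (lin 1 4 2)" by (rule lin_perm) simp_all
lemma lp_1_5_6: "linperm (lin 1 5 6)" by (rule lin_perm) simp_all
lemma lp_2_1_4: "linperm (lin 2 1 4)" by (rule lin_perm) simp_all
lemma lp_2_1_5: "linperm (lin 2 1 5)" by (rule lin_perm) simp_all
lemma lp_2_1_6: "linperm (lin 2 1 6)" by (rule lin_perm) simp_all
lemma lp_2_1_7: "linperm (lin 2 1 7)" by (rule lin_perm) simp_all
lemma lp_2_7_1: "linperm (lin 2 7 1)" by (rule lin_perm) simp_all
lemma lp_4_1_7: "linperm (lin 4 1 7)" by (rule lin_perm) simp_all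
lemma lp_4_7_1: "linperm (lin 4 7 1)" by (rule lin_perm) simp_all
lemma lp_7_2_4: "linperm (lin 7 2 4)" by (rule lin_perm) simp_all
lemma lp_7_4_2: "linperm (lin 7 4 2)" by (rule lin_perm) simp_all

lemma rep11_NT: "neighbor_transitive 16 (PW (graph rep11))"
proof (rule NT_crit)
  show "rep11 0 = 0" by (simp add: rep11_def)
  show "rep11 permutes {..<8}" using rep_permutes[of 11] by (simp add: repf_def)
  show "\<exists>A B. linperm A \<and> linperm B \<and> (\<forall>y<8. rep11 (A (rep11 y)) = B y)"
    by (intro exI[of _ "lin 1 2 4"] exI[of _ "lin 1 2 4"] conjI lp_1_2_4 lp_1_2_4 all8)
       (simp_all add: lin_def rep11_def sucn)
  fix y0 :: nat assume "y0 < 8"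
  then have "y0 = 0 \<or> y0 = 1 \<or> y0 = 2 \<or> y0 = 3 \<or> y0 = 4 \<or> y0 = 5 \<or> y0 = 6 \<or> y0 = 7" by (simp only: lt8_cases)
  then show "\<exists>A B a b. linperm A \<and> linperm B \<and> a < 8 \<and> b < 8 \<and> xor (A y0) a = 0 \<and> (\<forall>y<8. rep11 (xor (A y) a) = xor (B (rep11 y)) b)"
  proof (elim disjE)
    assume "y0 = 0"
    then show ?thesis
      by (intro exI[of _ "lin 1 2 4"] exI[of _ "lin 1 2 4"] exI[of _ 0] exI[of _ 0] conjI lp_1_2_4 lp_1_2_4 all8)
         (simp_all add: lin_def rep11_def sucn)
  next
    assume "y0 = 1"
    then show ?thesis
      by (intro exI[of _ "lin 1 2 4"] exI[of _ "lin 1 2 4"] exI[of _ 1] exI[of _ 1] conjI lp_1_2_4 lp_1_2_4 all8)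
         (simp_all add: lin_def rep11_def sucn)
  next
    assume "y0 = 2"
    then show ?thesis
      by (intro exI[of _ "lin 1 2 4"] exI[of _ "lin 1 2 4"] exI[of _ 2] exI[of _ 2] conjI lp_1_2_4 lp_1_2_4 all8)
         (simp_all add: lin_def rep11_def sucn)
  next
    assume "y0 = 3"
    then show ?thesis
      by (intro exI[of _ "lin 1 2 4"] exI[of _ "lin 1 2 4"] exI[of _ 3] exI[of _ 3] conjI lp_1_2_4 lp_1_2_4 all8)
         (simp_all add: lin_def rep11_def sucn)
  next
    assume "y0 = 4"
    then show ?thesis
      by (intro exI[of _ "lin 1 2 4"] exI[of _ "lin 1 2 4"] exI[of _ 4] exI[of _ 4] conjI lp_1_2_4 lp_1_2_4 all8)
         (simp_all add: lin_def rep11_def sucn)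
  next
    assume "y0 = 5"
    then show ?thesis
      by (intro exI[of _ "lin 1 2 4"] exI[of _ "lin 1 2 4"] exI[of _ 5] exI[of _ 5] conjI lp_1_2_4 lp_1_2_4 all8)
         (simp_all add: lin_def rep11_def sucn)
  next
    assume "y0 = 6"
    then show ?thesis
      by (intro exI[of _ "lin 1 2 4"] exI[of _ "lin 1 2 4"] exI[of _ 6] exI[of _ 6] conjI lp_1_2_4 lp_1_2_4 all8)
         (simp_all add: lin_def rep11_def sucn)
  next
    assume "y0 = 7"
    then show ?thesis
      by (intro exI[of _ "lin 1 2 4"] exI[of _ "lin 1 2 4"] exI[of _ 7] exI[of _ 7] conjI lp_1_2_4 lp_1_2_4 all8)
         (simp_all add: lin_def rep11_def sucn)
  qed
qed

lemma rep12_NT: "neighbor_transitive 16 (PW (graph rep12))"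
proof (rule NT_crit)
  show "rep12 0 = 0" by (simp add: rep12_def)
  show "rep12 permutes {..<8}" using rep_permutes[of 12] by (simp add: repf_def)
  show "\<exists>A B. linperm A \<and> linperm B \<and> (\<forall>y<8. rep12 (A (rep12 y)) = B y)"
    by (intro exI[of _ "lin 1 2 4"] exI[of _ "lin 1 2 4"] conjI lp_1_2_4 lp_1_2_4 all8)
       (simp_all add: lin_def rep12_def sucn)
  fix y0 :: nat assume "y0 < 8"
  then have "y0 = 0 \<or> y0 = 1 \<or> y0 = 2 \<or> y0 = 3 \<or> y0 = 4 \<or> y0 = 5 \<or> y0 = 6 \<or> y0 = 7" by (simp only: lt8_cases)
  then show "\<exists>A B a b. linperm A \<and> linperm B \<and> a < 8 \<and> b < 8 \<and> xor (A y0) a = 0 \<and> (\<forall>y<8. rep12 (xor (A y) a) = xor (B (rep12 y)) b)"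
  proof (elim disjE)
    assume "y0 = 0"
    then show ?thesis
      by (intro exI[of _ "lin 1 2 4"] exI[of _ "lin 1 2 4"] exI[of _ 0] exI[of _ 0] conjI lp_1_2_4 lp_1_2_4 all8)
         (simp_all add: lin_def rep12_def sucn)
  next
    assume "y0 = 1"
    then show ?thesis
      by (intro exI[of _ "lin 1 2 4"] exI[of _ "lin 1 2 4"] exI[of _ 1] exI[of _ 1] conjI lp_1_2_4 lp_1_2_4 all8)
         (simp_all add: lin_def rep12_def sucn)
  next
    assume "y0 = 2"
    then show ?thesis
      by (intro exI[of _ "lin 1 2 4"] exI[of _ "lin 1 2 5"] exI[of _ 2] exI[of _ 2] conjI lp_1_2_4 lp_1_2_5 all8)
         (simp_all add: lin_def rep12_def sucn)
  next
    assume "y0 = 3"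
    then show ?thesis
      by (intro exI[of _ "lin 1 2 4"] exI[of _ "lin 1 2 5"] exI[of _ 3] exI[of _ 3] conjI lp_1_2_4 lp_1_2_5 all8)
         (simp_all add: lin_def rep12_def sucn)
  next
    assume "y0 = 4"
    then show ?thesis
      by (intro exI[of _ "lin 1 2 4"] exI[of _ "lin 1 3 4"] exI[of _ 4] exI[of _ 4] conjI lp_1_2_4 lp_1_3_4 all8)
         (simp_all add: lin_def rep12_def sucn)
  next
    assume "y0 = 5"
    then show ?thesis
      by (intro exI[of _ "lin 1 2 4"] exI[of _ "lin 1 3 4"] exI[of _ 5] exI[of _ 5] conjI lp_1_2_4 lp_1_3_4 all8)
         (simp_all add: lin_def rep12_def sucn)
  next
    assume "y0 = 6"
    then show ?thesis
      by (intro exI[of _ "lin 1 2 4"] exI[of _ "lin 1 3 5"] exI[of _ 6] exI[of _ 7] conjI lp_1_2_4 lp_1_3_5 all8)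
         (simp_all add: lin_def rep12_def sucn)
  next
    assume "y0 = 7"
    then show ?thesis
      by (intro exI[of _ "lin 1 2 4"] exI[of _ "lin 1 3 5"] exI[of _ 7] exI[of _ 6] conjI lp_1_2_4 lp_1_3_5 all8)
         (simp_all add: lin_def rep12_def sucn)
  qed
qed

lemma rep13_NT: "neighbor_transitive 16 (PW (graph rep13))"
proof (rule NT_crit)
  show "rep13 0 = 0" by (simp add: rep13_def)
  show "rep13 permutes {..<8}" using rep_permutes[of 13] by (simp add: repf_def)
  show "\<exists>A B. linperm A \<and> linperm B \<and> (\<forall>y<8. rep13 (A (rep13 y)) = B y)"
    by (intro exI[of _ "lin 1 3 4"] exI[of _ "lin 1 3 4"] conjI lp_1_3_4 lp_1_3_4 all8)
       (simp_all add: lin_def rep13_def sucn)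
  fix y0 :: nat assume "y0 < 8"
  then have "y0 = 0 \<or> y0 = 1 \<or> y0 = 2 \<or> y0 = 3 \<or> y0 = 4 \<or> y0 = 5 \<or> y0 = 6 \<or> y0 = 7" by (simp only: lt8_cases)
  then show "\<exists>A B a b. linperm A \<and> linperm B \<and> a < 8 \<and> b < 8 \<and> xor (A y0) a = 0 \<and> (\<forall>y<8. rep13 (xor (A y) a) = xor (B (rep13 y)) b)"
  proof (elim disjE)
    assume "y0 = 0"
    then show ?thesis
      by (intro exI[of _ "lin 1 2 4"] exI[of _ "lin 1 2 4"] exI[of _ 0] exI[of _ 0] conjI lp_1_2_4 lp_1_2_4 all8)
         (simp_all add: lin_def rep13_def sucn)
  next
    assume "y0 = 1"
    then show ?thesis
      by (intro exI[of _ "lin 1 2 4"] exI[of _ "lin 1 2 7"] exI[of _ 1] exI[of _ 1] conjI lp_1_2_4 lp_1_2_7 all8)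
         (simp_all add: lin_def rep13_def sucn)
  next
    assume "y0 = 2"
    then show ?thesis
      by (intro exI[of _ "lin 1 2 4"] exI[of _ "lin 1 2 5"] exI[of _ 2] exI[of _ 2] conjI lp_1_2_4 lp_1_2_5 all8)
         (simp_all add: lin_def rep13_def sucn)
  next
    assume "y0 = 3"
    then show ?thesis
      by (intro exI[of _ "lin 1 2 4"] exI[of _ "lin 1 2 6"] exI[of _ 3] exI[of _ 3] conjI lp_1_2_4 lp_1_2_6 all8)
         (simp_all add: lin_def rep13_def sucn)
  next
    assume "y0 = 4"
    then show ?thesis
      by (intro exI[of _ "lin 1 3 4"] exI[of _ "lin 2 1 4"] exI[of _ 4] exI[of _ 4] conjI lp_1_3_4 lp_2_1_4 all8)
         (simp_all add: lin_def rep13_def sucn)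
  next
    assume "y0 = 5"
    then show ?thesis
      by (intro exI[of _ "lin 1 3 4"] exI[of _ "lin 2 1 7"] exI[of _ 5] exI[of _ 6] conjI lp_1_3_4 lp_2_1_7 all8)
         (simp_all add: lin_def rep13_def sucn)
  next
    assume "y0 = 6"
    then show ?thesis
      by (intro exI[of _ "lin 1 3 4"] exI[of _ "lin 2 1 6"] exI[of _ 7] exI[of _ 5] conjI lp_1_3_4 lp_2_1_6 all8)
         (simp_all add: lin_def rep13_def sucn)
  next
    assume "y0 = 7"
    then show ?thesis
      by (intro exI[of _ "lin 1 3 4"] exI[of _ "lin 2 1 5"] exI[of _ 6] exI[of _ 7] conjI lp_1_3_4 lp_2_1_5 all8)
         (simp_all add: lin_def rep13_def sucn)
  qed
qed

lemma rep14_NT: "neighbor_transitive 16 (PW (graph rep14))"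
proof (rule NT_crit)
  show "rep14 0 = 0" by (simp add: rep14_def)
  show "rep14 permutes {..<8}" using rep_permutes[of 14] by (simp add: repf_def)
  show "\<exists>A B. linperm A \<and> linperm B \<and> (\<forall>y<8. rep14 (A (rep14 y)) = B y)"
    by (intro exI[of _ "lin 1 3 5"] exI[of _ "lin 1 5 6"] conjI lp_1_3_5 lp_1_5_6 all8)
       (simp_all add: lin_def rep14_def sucn)
  fix y0 :: nat assume "y0 < 8"
  then have "y0 = 0 \<or> y0 = 1 \<or> y0 = 2 \<or> y0 = 3 \<or> y0 = 4 \<or> y0 = 5 \<or> y0 = 6 \<or> y0 = 7" by (simp only: lt8_cases)
  then show "\<exists>A B a b. linperm A \<and> linperm B \<and> a < 8 \<and> b < 8 \<and> xor (A y0) a = 0 \<and> (\<forall>y<8. rep14 (xor (A y) a) = xor (B (rep14 y)) b)"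
  proof (elim disjE)
    assume "y0 = 0"
    then show ?thesis
      by (intro exI[of _ "lin 1 2 4"] exI[of _ "lin 1 2 4"] exI[of _ 0] exI[of _ 0] conjI lp_1_2_4 lp_1_2_4 all8)
         (simp_all add: lin_def rep14_def sucn)
  next
    assume "y0 = 1"
    then show ?thesis
      by (intro exI[of _ "lin 1 2 6"] exI[of _ "lin 1 4 2"] exI[of _ 1] exI[of _ 1] conjI lp_1_2_6 lp_1_4_2 all8)
         (simp_all add: lin_def rep14_def sucn)
  next
    assume "y0 = 2"
    then show ?thesis
      by (intro exI[of _ "lin 1 2 7"] exI[of _ "lin 7 2 4"] exI[of _ 2] exI[of _ 2] conjI lp_1_2_7 lp_7_2_4 all8)
         (simp_all add: lin_def rep14_def sucn)
  next
    assume "y0 = 3"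
    then show ?thesis
      by (intro exI[of _ "lin 1 2 5"] exI[of _ "lin 7 4 2"] exI[of _ 3] exI[of _ 5] conjI lp_1_2_5 lp_7_4_2 all8)
         (simp_all add: lin_def rep14_def sucn)
  next
    assume "y0 = 4"
    then show ?thesis
      by (intro exI[of _ "lin 1 3 6"] exI[of _ "lin 4 1 7"] exI[of _ 6] exI[of _ 7] conjI lp_1_3_6 lp_4_1_7 all8)
         (simp_all add: lin_def rep14_def sucn)
  next
    assume "y0 = 5"
    then show ?thesis
      by (intro exI[of _ "lin 1 3 4"] exI[of _ "lin 2 1 7"] exI[of _ 5] exI[of _ 6] conjI lp_1_3_4 lp_2_1_7 all8)
         (simp_all add: lin_def rep14_def sucn)
  next
    assume "y0 = 6"
    then show ?thesis
      by (intro exI[of _ "lin 1 3 7"] exI[of _ "lin 2 7 1"] exI[of _ 4] exI[of _ 4] conjI lp_1_3_7 lp_2_7_1 all8)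
         (simp_all add: lin_def rep14_def sucn)
  next
    assume "y0 = 7"
    then show ?thesis
      by (intro exI[of _ "lin 1 3 5"] exI[of _ "lin 4 7 1"] exI[of _ 7] exI[of _ 3] conjI lp_1_3_5 lp_4_7_1 all8)
         (simp_all add: lin_def rep14_def sucn)
  qed
qed

lemma kernel14: "gf2_dim (code_kernel 16 (PW (graph rep14))) = 8"
proof -
  have "code_kernel 16 (PW (graph rep14)) = fib (0, 0)"
  proof (rule kernel_fib)
    show "rep14 0 = 0" by (simp add: rep14_def)
    show "y < 8 \<Longrightarrow> rep14 y < 8" for y by (simp add: rep14_def)
    fix y0 :: nat assume "0 < y0" "y0 < 8"
    then have "y0 = 1 \<or> y0 = 2 \<or> y0 = 3 \<or> y0 = 4 \<or> y0 = 5 \<or> y0 = 6 \<or> y0 = 7" by (simp only: lt8_cases) auto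
    then show "\<exists>y'<8. rep14 (xor y' y0) \<noteq> xor (rep14 y') (rep14 y0)"
    proof (elim disjE)
      assume "y0 = 1" then show ?thesis by (intro exI[of _ 2]) (simp add: rep14_def sucn)
    qed (intro exI[of _ 1], simp add: rep14_def sucn)+
  qed
  moreover have "card (fib (0, 0)) = 2 ^ 8" by (simp add: card_fib)
  ultimately show ?thesis
    using dim_eq[OF kernel_subspace, of 16 "PW (graph rep14)"] kernel_sub finite_subset finite_Fn by metis
qed

lemma rank_rep: "r \<in> {11, 12, 13, 14} \<Longrightarrow> code_rank (S_tau (repf r)) = r"
  using rep_permutes[of r] S_tau_PW rank11 rank12 rank13 rank14 by (auto simp: repf_def)

lemma NT_rep: "r \<in> {11, 12, 13, 14} \<Longrightarrow> neighbor_transitive 16 (S_tau (repf r))"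
  using rep_permutes[of r] S_tau_PW rep11_NT rep12_NT rep13_NT rep14_NT by (auto simp: repf_def)

lemma S_tau_basic: "\<tau> permutes {..<8} \<Longrightarrow> \<tau> 0 = 0 \<Longrightarrow> zero_word \<in> S_tau \<tau> \<and> S_tau \<tau> \<subseteq> Fn 16"
  using S_tau_PW[of \<tau>] zero_PW[of \<tau>] PW_Fn by auto

theorem theorem4:
  shows "(\<forall>\<tau>. \<tau> permutes {..<8} \<and> \<tau> 0 = 0 \<longrightarrow> neighbor_transitive 16 (S_tau \<tau>))
   \<and> (\<forall>\<tau> \<sigma>. \<tau> permutes {..<8} \<and> \<tau> 0 = 0 \<and> \<sigma> permutes {..<8} \<and> \<sigma> 0 = 0 \<longrightarrow>
        (codes_isomorphic 16 (S_tau \<tau>) (S_tau \<sigma>) \<longleftrightarrow> code_rank (S_tau \<tau>) = code_rank (S_tau \<sigma>)))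
   \<and> {code_rank (S_tau \<tau>) | \<tau>. \<tau> permutes {..<8} \<and> \<tau> 0 = 0} = {11, 12, 13, 14}
   \<and> (\<forall>\<tau>. \<tau> permutes {..<8} \<and> \<tau> 0 = 0 \<and> code_rank (S_tau \<tau>) = 14 \<longrightarrow>
        gf2_dim (code_kernel 16 (S_tau \<tau>)) = 8)"
proof -
  have cls: "\<exists>r\<in>{11, 12, 13, 14::nat}. codes_isomorphic 16 (S_tau \<tau>) (S_tau (repf r)) \<and> code_rank (S_tau \<tau>) = r"
    if tp: "\<tau> permutes {..<8}" "\<tau> 0 = 0" for \<tau>
  proof -
    obtain r where r: "r \<in> {11, 12, 13, 14::nat}" "codes_isomorphic 16 (S_tau \<tau>) (S_tau (repf r))"
      using main_class[OF tp] by blast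
    have b1: "zero_word \<in> S_tau \<tau>" "S_tau \<tau> \<subseteq> Fn 16" using S_tau_basic[OF tp] by auto
    have b2: "zero_word \<in> S_tau (repf r)" using S_tau_basic[of "repf r"] rep_permutes[OF r(1)] by auto
    have "code_rank (S_tau \<tau>) = code_rank (S_tau (repf r))"
      by (rule rank_iso[OF r(2) b1(1) b2 b1(2)])
    then show ?thesis using r rank_rep[OF r(1)] by auto
  qed
  have P1: "\<forall>\<tau>. \<tau> permutes {..<8} \<and> \<tau> 0 = 0 \<longrightarrow> neighbor_transitive 16 (S_tau \<tau>)"
  proof (intro allI impI)
    fix \<tau> :: "nat \<Rightarrow> nat" assume h: "\<tau> permutes {..<8} \<and> \<tau> 0 = 0"
    obtain r where r: "r \<in> {11, 12, 13, 14::nat}" "codes_isomorphic 16 (S_tau \<tau>) (S_tau (repf r))"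
      using cls h by blast
    show "neighbor_transitive 16 (S_tau \<tau>)" by (rule NT_iso[OF iso_sym[OF r(2)] NT_rep[OF r(1)]])
  qed
  have P2: "\<forall>\<tau> \<sigma>. \<tau> permutes {..<8} \<and> \<tau> 0 = 0 \<and> \<sigma> permutes {..<8} \<and> \<sigma> 0 = 0 \<longrightarrow>
        (codes_isomorphic 16 (S_tau \<tau>) (S_tau \<sigma>) \<longleftrightarrow> code_rank (S_tau \<tau>) = code_rank (S_tau \<sigma>))"
  proof (intro allI impI)
    fix \<tau> \<sigma> :: "nat \<Rightarrow> nat" assume h: "\<tau> permutes {..<8} \<and> \<tau> 0 = 0 \<and> \<sigma> permutes {..<8} \<and> \<sigma> 0 = 0"
    show "codes_isomorphic 16 (S_tau \<tau>) (S_tau \<sigma>) \<longleftrightarrow> code_rank (S_tau \<tau>) = code_rank (S_tau \<sigma>)"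
    proof
      assume i: "codes_isomorphic 16 (S_tau \<tau>) (S_tau \<sigma>)"
      have b1: "zero_word \<in> S_tau \<tau>" "S_tau \<tau> \<subseteq> Fn 16" using S_tau_basic h by auto
      have b2: "zero_word \<in> S_tau \<sigma>" using S_tau_basic h by auto
      show "code_rank (S_tau \<tau>) = code_rank (S_tau \<sigma>)"
        by (rule rank_iso[OF i b1(1) b2 b1(2)])
    next
      assume e: "code_rank (S_tau \<tau>) = code_rank (S_tau \<sigma>)"
      obtain r1 where r1: "codes_isomorphic 16 (S_tau \<tau>) (S_tau (repf r1))" "code_rank (S_tau \<tau>) = r1"
        using cls h by blast
      obtain r2 where r2: "codes_isomorphic 16 (S_tau \<sigma>) (S_tau (repf r2))" "code_rank (S_tau \<sigma>) = r2"
        using cls h by blast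
      have "r1 = r2" using e r1 r2 by simp
      then have "codes_isomorphic 16 (S_tau (repf r1)) (S_tau \<sigma>)" using iso_sym[OF r2(1)] by simp
      then show "codes_isomorphic 16 (S_tau \<tau>) (S_tau \<sigma>)" by (rule iso_trans[OF r1(1)])
    qed
  qed
  have P3: "{code_rank (S_tau \<tau>) | \<tau>. \<tau> permutes {..<8} \<and> \<tau> 0 = 0} = {11, 12, 13, 14}"
  proof
    show "{code_rank (S_tau \<tau>) | \<tau>. \<tau> permutes {..<8} \<and> \<tau> 0 = 0} \<subseteq> {11, 12, 13, 14}"
      using cls by blast
    show "{11, 12, 13, 14} \<subseteq> {code_rank (S_tau \<tau>) | \<tau>. \<tau> permutes {..<8} \<and> \<tau> 0 = 0}"
    proof
      fix r :: nat assume r: "r \<in> {11, 12, 13, 14}"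
      then show "r \<in> {code_rank (S_tau \<tau>) | \<tau>. \<tau> permutes {..<8} \<and> \<tau> 0 = 0}"
        using rank_rep[OF r] rep_permutes[OF r] by (intro CollectI exI[of _ "repf r"]) auto
    qed
  qed
  have P4: "\<forall>\<tau>. \<tau> permutes {..<8} \<and> \<tau> 0 = 0 \<and> code_rank (S_tau \<tau>) = 14 \<longrightarrow>
        gf2_dim (code_kernel 16 (S_tau \<tau>)) = 8"
  proof (intro allI impI)
    fix \<tau> :: "nat \<Rightarrow> nat" assume h: "\<tau> permutes {..<8} \<and> \<tau> 0 = 0 \<and> code_rank (S_tau \<tau>) = 14"
    obtain r where r: "r \<in> {11, 12, 13, 14::nat}" "codes_isomorphic 16 (S_tau \<tau>) (S_tau (repf r))"
      "code_rank (S_tau \<tau>) = r" using cls h by blast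
    have "r = 14" using r h by simp
    then have "codes_isomorphic 16 (S_tau \<tau>) (PW (graph rep14))"
      using r(2) rep_permutes[of 14] S_tau_PW by (simp add: repf_def)
    then show "gf2_dim (code_kernel 16 (S_tau \<tau>)) = 8" using kernel_dim_iso kernel14 by metis
  qed
  show ?thesis using P1 P2 P3 P4 by blast
qed

end
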